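(* $\mathbf{FP}\subseteq\mathbf{FPC}$: every total function $f:\mathbb Z^m\to\mathbb Z$ computable by a deterministic Turing machine in time polynomial in the total binary length of its input is computed by some well-typed CorePolyC program.
   Context: CorePolyC. Types are $\mathtt{iint},\mathtt{int},\mathtt{bool}$; $\mathsf{Int}=\{\mathtt{iint},\mathtt{int}\}$, ordered by $\mathtt{iint}\preccurlyeq\mathtt{int}$. Values are unbounded integers ($\mathbb Z$) and booleans $\#t,\#f$. Expressions: variables $x$; constants (nonempty decimal digit strings denoting natural numbers; $\mathtt{true}$, $\mathtt{false}$); operator applications $\mathtt{op}(e_1,\dots,e_m)$; parenthesized $(e)$. Operators and semantics: unary $-$ (negation); binary $+,-,/,\%$ (integer addition, subtraction, division, remainder, with division and remainder by $0$ returning $0$); $\mathtt{size}$, with $\mathtt{size}(v)=\lceil\log_2(\mathrm{abs}(v)+1)\rceil$; comparisons $\texttt{>=},\texttt{<=},\texttt{>},\texttt{<},\texttt{==},\texttt{!=}$ on integers returning booleans; boolean $\texttt{!},\texttt{\&\&},\texttt{||}$. Statements: declaration $t\ x;$; assignment $x=e;$; block $\{s_1\dots s_m\}$; conditional $\mathbf{if}(e)\ s_1\ \mathbf{else}\ s_2$; loop $\mathbf{for}(x<\mathtt{size}(e))\ s$ (loop bounds are always syntactically of the form $\mathtt{size}(e)$). A program is $\mathbf{int\ main}(\mathbf{int}\ x_1,\dots,\mathbf{int}\ x_m)\{s_1\dots s_k\ \mathbf{return}\ e;\}$. Semantics (big-step). A store $\Sigma$ is a finite partial map from variables to values; $\Sigma[x\mapsto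 v]$ is the update. $\Sigma\vdash e\Downarrow v$: a variable $x\in\mathrm{dom}\,\Sigma$ evaluates to $\Sigma(x)$, constants to their value, $\mathtt{op}(e_1,\dots,e_m)$ to $\mathtt{op}$ applied to the values of the $e_i$. $\Sigma\vdash s\Downarrow\Sigma'$: $t\ x;$ gives $\Sigma[x\mapsto 0]$ if $t\in\mathsf{Int}$ and $\Sigma[x\mapsto\#f]$ if $t=\mathtt{bool}$; $x=e;$ (with $x\in\mathrm{dom}\,\Sigma$) gives $\Sigma[x\mapsto v]$ where $\Sigma\vdash e\Downarrow v$; a sequence or block executes its statements in order threading the store (a block returns the final store); a conditional evaluates its guard to a boolean and executes the corresponding branch; $\mathbf{for}(x<e)\ s$ evaluates $e$ once to an integer $i$, sets $\Sigma_0=\Sigma$, executes $s$ from $\Sigma_j[x\mapsto j]$ obtaining $\Sigma_{j+1}$ for $j=0,\dots,i-1$, and ends in $\Sigma_i$ (i.e. in $\Sigma$ if $i\le 0$). A program on inputs $v_1,\dots,v_m$ runs its statements from the store $[x_1\mapsto v_1,\dots,x_m\mapsto v_m]$ and outputs the value of its return expression in the resulting store. Type system. A typing environment $\Gamma$ is a finite partial map from variables to types; $\ell\in\{\#t,\#f\}$ is the loop indicator. Expression typing $\Gamma,\ell\vdash e:t$: a variable $x\in\mathrm{dom}\,\Gamma$ has type $\Gamma(x)$; digit literals have type $\mathtt{iint}$, $\mathtt{true},\mathtt{false}$ have type $\mathtt{bool}$; $\texttt{!},\texttt{\&\&},\texttt{||}$ take $\mathtt{bool}$ arguments to $\mathtt{bool}$;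 comparisons take arguments with types in $\mathsf{Int}$ to $\mathtt{bool}$; $+,-,/,\%$ take arguments with types in $\mathsf{Int}$ to their supremum under $\preccurlyeq$ ($\mathtt{iint}$ iff all arguments are $\mathtt{iint}$); $\mathtt{size}$ takes only an $\mathtt{iint}$ argument, giving $\mathtt{iint}$; parentheses preserve types. Statement typing $\Gamma,\ell\vdash s:\Gamma'$: $t\ x;$ is typable iff $x\notin\mathrm{dom}\,\Gamma$ and not($\ell=\#t$ and $t=\mathtt{iint}$), giving $\Gamma[x\mapsto t]$; $x=e;$ is typable iff $x\in\mathrm{dom}\,\Gamma$, not($\ell=\#t$ and $\Gamma(x)=\mathtt{iint}$), and $\Gamma,\ell\vdash e:t$ with $t,\Gamma(x)$ both in $\mathsf{Int}$ or both $\mathtt{bool}$, giving $\Gamma$; a sequence $s_1\dots s_m$ threads $\Gamma_0=\Gamma$, $\Gamma_{i-1},\ell\vdash s_i:\Gamma_i$, giving $\Gamma_m$; a block $\{\tilde s\}$ is typable if its sequence is, giving $\Gamma$; a conditional needs a guard of type $\mathtt{bool}$ and both branches typable under $\Gamma,\ell$, giving $\Gamma$; $\mathbf{for}(x<e)\ s$ needs $\Gamma,\ell\vdash e:\mathtt{iint}$, $x\notin\mathrm{dom}\,\Gamma$, and $\Gamma[x\mapsto\mathtt{iint}],\#t\vdash s:\Gamma'$ for some $\Gamma'$, giving $\Gamma$. A program is well-typed if its statements are typable starting from $[x_1\mapsto\mathtt{int},\dots,x_m\mapsto\mathtt{int}]$ with $\ell=\#f$, ending in some $\Gamma'$, and its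 return expression has a type in $\mathsf{Int}$ under $\Gamma',\#f$. A well-typed program $p$ with $m$ inputs computes a total function $[\![p]\!]:\mathbb Z^m\to\mathbb Z$; $\mathbf{FPC}$ is the set of all such functions. $\mathbf{FP}$ is the class of total functions $\mathbb Z^m\to\mathbb Z$ ($m\ge0$) computable by a deterministic Turing machine in time polynomial in the total binary length of the input. *)

theory Defs
  imports Complex_Main
begin

datatype ty = TIInt | TInt | TBool

definition is_int_ty :: "ty \<Rightarrow> bool" where
  "is_int_ty t \<longleftrightarrow> t = TIInt \<or> t = TInt"

datatype oper = Neg | Add | Sub | Div | Mod | Size
  | Ge | Le | Gt | Lt | Eq | Neq | Not | And | Or

datatype expr =
    Var string
  | NumLit nat            \<comment> \<open>a nonempty decimal digit string, represented by the natural it denotes\<close>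
  | TrueLit
  | FalseLit
  | App oper "expr list"
  | Paren expr

datatype stmt =
    Decl ty string
  | Assign string expr
  | Block "stmt list"
  | If expr stmt stmt
  | For string expr stmt  \<comment> \<open>For x e s  stands for  for(x < size(e)) s\<close>

record prog =
  params :: "string list"
  body   :: "stmt list"
  ret    :: expr

datatype val = VInt int | VBool bool

definition size_int :: "int \<Rightarrow> int" where
  "size_int v = \<lceil>log 2 (real_of_int (\<bar>v\<bar> + 1))\<rceil>"

text \<open>Integer division / remainder (C convention: truncation toward zero), with x/0 = x%0 = 0.\<close>
definition cdiv :: "int \<Rightarrow> int \<Rightarrow> int" where
  "cdiv a b = (if b = 0 then 0 else sgn a * sgn b * (\<bar>a\<bar> div \<bar>b\<bar>))"

definition cmod :: "int \<Rightarrow> int \<Rightarrow> int" where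
  "cmod a b = (if b = 0 then 0 else a - b * cdiv a b)"

definition int_bin :: "(int \<Rightarrow> int \<Rightarrow> val) \<Rightarrow> val list \<Rightarrow> val option" where
  "int_bin g vs = (case vs of [VInt a, VInt b] \<Rightarrow> Some (g a b) | _ \<Rightarrow> None)"

definition bool_bin :: "(bool \<Rightarrow> bool \<Rightarrow> bool) \<Rightarrow> val list \<Rightarrow> val option" where
  "bool_bin g vs = (case vs of [VBool a, VBool b] \<Rightarrow> Some (VBool (g a b)) | _ \<Rightarrow> None)"

fun apply_op :: "oper \<Rightarrow> val list \<Rightarrow> val option" where
  "apply_op Neg vs = (case vs of [VInt a] \<Rightarrow> Some (VInt (- a)) | _ \<Rightarrow> None)"
| "apply_op Add vs = int_bin (\<lambda>a b. VInt (a + b)) vs"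
| "apply_op Sub vs = int_bin (\<lambda>a b. VInt (a - b)) vs"
| "apply_op Div vs = int_bin (\<lambda>a b. VInt (cdiv a b)) vs"
| "apply_op Mod vs = int_bin (\<lambda>a b. VInt (cmod a b)) vs"
| "apply_op Size vs = (case vs of [VInt a] \<Rightarrow> Some (VInt (size_int a)) | _ \<Rightarrow> None)"
| "apply_op Ge vs = int_bin (\<lambda>a b. VBool (a \<ge> b)) vs"
| "apply_op Le vs = int_bin (\<lambda>a b. VBool (a \<le> b)) vs"
| "apply_op Gt vs = int_bin (\<lambda>a b. VBool (a > b)) vs"
| "apply_op Lt vs = int_bin (\<lambda>a b. VBool (a < b)) vs"
| "apply_op Eq vs = int_bin (\<lambda>a b. VBool (a = b)) vs"
| "apply_op Neq vs = int_bin (\<lambda>a b. VBool (a \<noteq> b)) vs"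
| "apply_op Not vs = (case vs of [VBool a] \<Rightarrow> Some (VBool (\<not> a)) | _ \<Rightarrow> None)"
| "apply_op And vs = bool_bin (\<and>) vs"
| "apply_op Or vs = bool_bin (\<or>) vs"

type_synonym store = "string \<Rightarrow> val option"

inductive eval :: "store \<Rightarrow> expr \<Rightarrow> val \<Rightarrow> bool" where
  eval_var: "\<Sigma> x = Some v \<Longrightarrow> eval \<Sigma> (Var x) v"
| eval_num: "eval \<Sigma> (NumLit n) (VInt (int n))"
| eval_true: "eval \<Sigma> TrueLit (VBool True)"
| eval_false: "eval \<Sigma> FalseLit (VBool False)"
| eval_app: "list_all2 (eval \<Sigma>) es vs \<Longrightarrow> apply_op f vs = Some v \<Longrightarrow> eval \<Sigma> (App f es) v"
| eval_paren: "eval \<Sigma> e v \<Longrightarrow> eval \<Sigma> (Paren e) v"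

inductive exec :: "store \<Rightarrow> stmt \<Rightarrow> store \<Rightarrow> bool"
  and exec_seq :: "store \<Rightarrow> stmt list \<Rightarrow> store \<Rightarrow> bool"
  and exec_loop :: "string \<Rightarrow> stmt \<Rightarrow> int \<Rightarrow> int \<Rightarrow> store \<Rightarrow> store \<Rightarrow> bool"
where
  exec_decl_int: "is_int_ty t \<Longrightarrow> exec \<Sigma> (Decl t x) (\<Sigma>(x \<mapsto> VInt 0))"
| exec_decl_bool: "exec \<Sigma> (Decl TBool x) (\<Sigma>(x \<mapsto> VBool False))"
| exec_assign: "x \<in> dom \<Sigma> \<Longrightarrow> eval \<Sigma> e v \<Longrightarrow> exec \<Sigma> (Assign x e) (\<Sigma>(x \<mapsto> v))"
| exec_block: "exec_seq \<Sigma> ss \<Sigma>' \<Longrightarrow> exec \<Sigma> (Block ss) \<Sigma>'"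
| exec_if_true: "eval \<Sigma> e (VBool True) \<Longrightarrow> exec \<Sigma> s1 \<Sigma>' \<Longrightarrow> exec \<Sigma> (If e s1 s2) \<Sigma>'"
| exec_if_false: "eval \<Sigma> e (VBool False) \<Longrightarrow> exec \<Sigma> s2 \<Sigma>' \<Longrightarrow> exec \<Sigma> (If e s1 s2) \<Sigma>'"
| exec_for: "eval \<Sigma> (App Size [e]) (VInt i) \<Longrightarrow> exec_loop x s 0 i \<Sigma> \<Sigma>'
             \<Longrightarrow> exec \<Sigma> (For x e s) \<Sigma>'"
| exec_seq_nil: "exec_seq \<Sigma> [] \<Sigma>"
| exec_seq_cons: "exec \<Sigma> s \<Sigma>1 \<Longrightarrow> exec_seq \<Sigma>1 ss \<Sigma>' \<Longrightarrow> exec_seq \<Sigma> (s # ss) \<Sigma>'"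
| exec_loop_done: "i \<le> j \<Longrightarrow> exec_loop x s j i \<Sigma> \<Sigma>"
| exec_loop_step: "j < i \<Longrightarrow> exec (\<Sigma>(x \<mapsto> VInt j)) s \<Sigma>1 \<Longrightarrow> exec_loop x s (j + 1) i \<Sigma>1 \<Sigma>'
                   \<Longrightarrow> exec_loop x s j i \<Sigma> \<Sigma>'"

type_synonym tenv = "string \<Rightarrow> ty option"

definition ty_sup :: "ty list \<Rightarrow> ty" where
  "ty_sup ts = (if list_all (\<lambda>t. t = TIInt) ts then TIInt else TInt)"

fun op_type :: "oper \<Rightarrow> ty list \<Rightarrow> ty option" where
  "op_type Not ts = (if ts = [TBool] then Some TBool else None)"
| "op_type And ts = (if ts = [TBool, TBool] then Some TBool else None)"
| "op_type Or ts = (if ts = [TBool, TBool] then Some TBool else None)"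
| "op_type Size ts = (if ts = [TIInt] then Some TIInt else None)"
| "op_type Neg ts = (if length ts = 1 \<and> list_all is_int_ty ts then Some (ty_sup ts) else None)"
| "op_type Add ts = (if length ts = 2 \<and> list_all is_int_ty ts then Some (ty_sup ts) else None)"
| "op_type Sub ts = (if length ts = 2 \<and> list_all is_int_ty ts then Some (ty_sup ts) else None)"
| "op_type Div ts = (if length ts = 2 \<and> list_all is_int_ty ts then Some (ty_sup ts) else None)"
| "op_type Mod ts = (if length ts = 2 \<and> list_all is_int_ty ts then Some (ty_sup ts) else None)"
| "op_type Ge ts = (if length ts = 2 \<and> list_all is_int_ty ts then Some TBool else None)"
| "op_type Le ts = (if length ts = 2 \<and> list_all is_int_ty ts then Some TBool else None)"
| "op_type Gt ts = (if length ts = 2 \<and> list_all is_int_ty ts then Some TBool else None)"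
| "op_type Lt ts = (if length ts = 2 \<and> list_all is_int_ty ts then Some TBool else None)"
| "op_type Eq ts = (if length ts = 2 \<and> list_all is_int_ty ts then Some TBool else None)"
| "op_type Neq ts = (if length ts = 2 \<and> list_all is_int_ty ts then Some TBool else None)"

text \<open>Expression typing; the loop indicator plays no role in expression typing.\<close>
inductive has_ty :: "tenv \<Rightarrow> expr \<Rightarrow> ty \<Rightarrow> bool" where
  ty_var: "\<Gamma> x = Some t \<Longrightarrow> has_ty \<Gamma> (Var x) t"
| ty_num: "has_ty \<Gamma> (NumLit n) TIInt"
| ty_true: "has_ty \<Gamma> TrueLit TBool"
| ty_false: "has_ty \<Gamma> FalseLit TBool"
| ty_app: "list_all2 (has_ty \<Gamma>) es ts \<Longrightarrow> op_type f ts = Some t \<Longrightarrow> has_ty \<Gamma> (App f es) t"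
| ty_paren: "has_ty \<Gamma> e t \<Longrightarrow> has_ty \<Gamma> (Paren e) t"

definition compatible :: "ty \<Rightarrow> ty \<Rightarrow> bool" where
  "compatible t t' \<longleftrightarrow> (is_int_ty t \<and> is_int_ty t') \<or> (t = TBool \<and> t' = TBool)"

inductive stmt_ty :: "tenv \<Rightarrow> bool \<Rightarrow> stmt \<Rightarrow> tenv \<Rightarrow> bool"
  and seq_ty :: "tenv \<Rightarrow> bool \<Rightarrow> stmt list \<Rightarrow> tenv \<Rightarrow> bool"
where
  sty_decl: "x \<notin> dom \<Gamma> \<Longrightarrow> \<not> (lp \<and> t = TIInt) \<Longrightarrow> stmt_ty \<Gamma> lp (Decl t x) (\<Gamma>(x \<mapsto> t))"
| sty_assign: "x \<in> dom \<Gamma> \<Longrightarrow> \<not> (lp \<and> \<Gamma> x = Some TIInt) \<Longrightarrow> has_ty \<Gamma> e t \<Longrightarrow>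
               compatible t (the (\<Gamma> x)) \<Longrightarrow> stmt_ty \<Gamma> lp (Assign x e) \<Gamma>"
| sty_block: "seq_ty \<Gamma> lp ss \<Gamma>' \<Longrightarrow> stmt_ty \<Gamma> lp (Block ss) \<Gamma>"
| sty_if: "has_ty \<Gamma> e TBool \<Longrightarrow> stmt_ty \<Gamma> lp s1 \<Gamma>1 \<Longrightarrow> stmt_ty \<Gamma> lp s2 \<Gamma>2 \<Longrightarrow>
           stmt_ty \<Gamma> lp (If e s1 s2) \<Gamma>"
| sty_for: "has_ty \<Gamma> (App Size [e]) TIInt \<Longrightarrow> x \<notin> dom \<Gamma> \<Longrightarrow>
            stmt_ty (\<Gamma>(x \<mapsto> TIInt)) True s \<Gamma>' \<Longrightarrow> stmt_ty \<Gamma> lp (For x e s) \<Gamma>"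
| sty_nil: "seq_ty \<Gamma> lp [] \<Gamma>"
| sty_cons: "stmt_ty \<Gamma> lp s \<Gamma>1 \<Longrightarrow> seq_ty \<Gamma>1 lp ss \<Gamma>' \<Longrightarrow> seq_ty \<Gamma> lp (s # ss) \<Gamma>'"

definition well_typed :: "prog \<Rightarrow> bool" where
  "well_typed p \<longleftrightarrow> distinct (params p) \<and>
     (\<exists>\<Gamma>' t. seq_ty (map_of (zip (params p) (replicate (length (params p)) TInt))) False (body p) \<Gamma>'
             \<and> has_ty \<Gamma>' (ret p) t \<and> is_int_ty t)"

definition prog_runs :: "prog \<Rightarrow> int list \<Rightarrow> val \<Rightarrow> bool" where
  "prog_runs p vs v \<longleftrightarrow> length vs = length (params p) \<and>
     (\<exists>\<Sigma>'. exec_seq (map_of (zip (params p) (map VInt vs))) (body p) \<Sigma>' \<and> eval \<Sigma>' (ret p) v)"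

text \<open>A function Z^m -> Z is represented as f :: int list => int, only its values on lists
  of length m being relevant.\<close>
definition prog_computes :: "prog \<Rightarrow> nat \<Rightarrow> (int list \<Rightarrow> int) \<Rightarrow> bool" where
  "prog_computes p m f \<longleftrightarrow> length (params p) = m \<and>
     (\<forall>vs. length vs = m \<longrightarrow> (\<forall>v. prog_runs p vs v \<longleftrightarrow> v = VInt (f vs)))"

definition in_FPC :: "nat \<Rightarrow> (int list \<Rightarrow> int) \<Rightarrow> bool" where
  "in_FPC m f \<longleftrightarrow> (\<exists>p. well_typed p \<and> prog_computes p m f)"

text \<open>Tape symbols are naturals below nsyms: 0 = blank, 1 = bit 0, 2 = bit 1, 3 = minus sign,
  4 = separator; further symbols are available to the machine.  States are naturals below nstates;
  0 is the start state, 1 the halting state.  Moves: -1 (left), 0 (stay), 1 (right).\<close>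
record tm =
  nstates :: nat
  nsyms :: nat
  delta :: "nat \<Rightarrow> nat \<Rightarrow> nat \<times> nat \<times> int"

definition valid_tm :: "tm \<Rightarrow> bool" where
  "valid_tm M \<longleftrightarrow> nstates M \<ge> 2 \<and> nsyms M \<ge> 5 \<and>
     (\<forall>q < nstates M. \<forall>a < nsyms M. case delta M q a of (q', a', d) \<Rightarrow>
        q' < nstates M \<and> a' < nsyms M \<and> d \<in> {-1, 0, 1})"

type_synonym config = "nat \<times> (int \<Rightarrow> nat) \<times> int"

fun tm_step :: "tm \<Rightarrow> config \<Rightarrow> config" where
  "tm_step M (q, tp, h) =
     (if q = 1 then (q, tp, h)
      else (case delta M q (tp h) of (q', a, d) \<Rightarrow> (q', tp(h := a), h + d)))"

definition tm_run :: "tm \<Rightarrow> nat \<Rightarrow> config \<Rightarrow> config" where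
  "tm_run M n c = (tm_step M ^^ n) c"

fun bits :: "nat \<Rightarrow> nat list" where
  "bits n = (if n < 2 then [n + 1] else bits (n div 2) @ [n mod 2 + 1])"

definition enc_int :: "int \<Rightarrow> nat list" where
  "enc_int v = (if v < 0 then [3] else []) @ bits (nat \<bar>v\<bar>)"

definition enc_input :: "int list \<Rightarrow> nat list" where
  "enc_input vs = concat (map (\<lambda>v. enc_int v @ [4]) vs)"

definition init_config :: "nat list \<Rightarrow> config" where
  "init_config w = (0, (\<lambda>i. if 0 \<le> i \<and> i < int (length w) then w ! nat i else 0), 0)"

definition tm_output_is :: "config \<Rightarrow> nat list \<Rightarrow> bool" where
  "tm_output_is c out \<longleftrightarrow> (case c of (q, tp, h) \<Rightarrow>
     q = 1 \<and> (\<forall>i < length out. tp (h + int i) = out ! i) \<and> tp (h + int (length out)) = 0)"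

definition in_FP :: "nat \<Rightarrow> (int list \<Rightarrow> int) \<Rightarrow> bool" where
  "in_FP m f \<longleftrightarrow> (\<exists>M c d. valid_tm M \<and>
     (\<forall>vs. length vs = m \<longrightarrow>
        (\<exists>t. t \<le> c * (length (enc_input vs) + 1) ^ d \<and>
             tm_output_is (tm_run M t (init_config (enc_input vs))) (enc_int (f vs)))))"

end

theory Submission
  imports Defs
begin


fun evalf :: "store \<Rightarrow> expr \<Rightarrow> val option" where
  "evalf \<Sigma> (Var x) = \<Sigma> x"
| "evalf \<Sigma> (NumLit n) = Some (VInt (int n))"
| "evalf \<Sigma> TrueLit = Some (VBool True)"
| "evalf \<Sigma> FalseLit = Some (VBool False)"
| "evalf \<Sigma> (App f es) = (case those (map (evalf \<Sigma>) es) of Some vs \<Rightarrow> apply_op f vs | None \<Rightarrow> None)"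
| "evalf \<Sigma> (Paren e) = evalf \<Sigma> e"

lemma l2_mono_set: "list_all2 P xs ys \<Longrightarrow> (\<And>x y. x \<in> set xs \<Longrightarrow> P x y \<Longrightarrow> Q x y) \<Longrightarrow> list_all2 Q xs ys"
  by (induction xs ys rule: list_all2_induct) auto

lemma those_l2: "list_all2 (\<lambda>e v. g e = Some v) es vs \<Longrightarrow> those (map g es) = Some vs"
  by (induction es vs rule: list_all2_induct) auto

lemma those_l2': "those (map g es) = Some vs \<Longrightarrow> list_all2 (\<lambda>e v. g e = Some v) es vs"
  by (induction es arbitrary: vs) (auto split: option.splits)

lemma eval_evalf: "eval \<Sigma> e v \<Longrightarrow> evalf \<Sigma> e = Some v"
proof (induction rule: eval.induct)
  case (eval_app \<Sigma> es vs f v)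
  have "list_all2 (\<lambda>e v. evalf \<Sigma> e = Some v) es vs"
    using eval_app(1) by (rule list_all2_mono) auto
  then show ?case using eval_app(2) by (simp add: those_l2)
qed auto

lemma evalf_eval: "evalf \<Sigma> e = Some v \<Longrightarrow> eval \<Sigma> e v"
proof (induction e arbitrary: v)
  case (App f es)
  then obtain vs where vs: "those (map (evalf \<Sigma>) es) = Some vs" "apply_op f vs = Some v"
    by (auto split: option.splits)
  have "list_all2 (\<lambda>e v. evalf \<Sigma> e = Some v) es vs" using vs(1) by (rule those_l2')
  then have "list_all2 (eval \<Sigma>) es vs"
    by (rule l2_mono_set) (use App.IH in auto)
  then show ?case using vs(2) by (rule eval_app)
qed (auto intro: eval.intros)

lemma eval_iff: "eval \<Sigma> e v \<longleftrightarrow> evalf \<Sigma> e = Some v"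
  using eval_evalf evalf_eval by blast

fun tyf :: "tenv \<Rightarrow> expr \<Rightarrow> ty option" where
  "tyf \<Gamma> (Var x) = \<Gamma> x"
| "tyf \<Gamma> (NumLit n) = Some TIInt"
| "tyf \<Gamma> TrueLit = Some TBool"
| "tyf \<Gamma> FalseLit = Some TBool"
| "tyf \<Gamma> (App f es) = (case those (map (tyf \<Gamma>) es) of Some ts \<Rightarrow> op_type f ts | None \<Rightarrow> None)"
| "tyf \<Gamma> (Paren e) = tyf \<Gamma> e"

lemma tyf_has_ty: "tyf \<Gamma> e = Some t \<Longrightarrow> has_ty \<Gamma> e t"
proof (induction e arbitrary: t)
  case (App f es)
  then obtain ts where ts: "those (map (tyf \<Gamma>) es) = Some ts" "op_type f ts = Some t"
    by (auto split: option.splits)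
  have "list_all2 (\<lambda>e v. tyf \<Gamma> e = Some v) es ts" using ts(1) by (rule those_l2')
  then have "list_all2 (has_ty \<Gamma>) es ts"
    by (rule l2_mono_set) (use App.IH in auto)
  then show ?case using ts(2) by (rule ty_app)
qed (auto intro: has_ty.intros)

lemma exec_det:
  "exec \<Sigma> s \<Sigma>1 \<Longrightarrow> exec \<Sigma> s \<Sigma>2 \<Longrightarrow> \<Sigma>1 = \<Sigma>2"
  "exec_seq \<Sigma> ss \<Sigma>1 \<Longrightarrow> exec_seq \<Sigma> ss \<Sigma>2 \<Longrightarrow> \<Sigma>1 = \<Sigma>2"
  "exec_loop x s j i \<Sigma> \<Sigma>1 \<Longrightarrow> exec_loop x s j i \<Sigma> \<Sigma>2 \<Longrightarrow> \<Sigma>1 = \<Sigma>2"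
proof (induction arbitrary: \<Sigma>2 and \<Sigma>2 and \<Sigma>2 rule: exec_exec_seq_exec_loop.inducts)
  case (exec_decl_int t \<Sigma> x)
  from exec_decl_int.prems show ?case by (cases rule: exec.cases) (use exec_decl_int in \<open>auto simp: is_int_ty_def\<close>)
next
  case (exec_decl_bool \<Sigma> x)
  from exec_decl_bool.prems show ?case by (cases rule: exec.cases) (auto simp: is_int_ty_def)
next
  case (exec_assign x \<Sigma> e v)
  from exec_assign.prems obtain v' where "eval \<Sigma> e v'" "\<Sigma>2 = \<Sigma>(x \<mapsto> v')"
    by (cases rule: exec.cases) auto
  then show ?case using exec_assign(2) by (simp add: eval_iff)
next
  case (exec_block \<Sigma> ss \<Sigma>')
  from exec_block.prems have "exec_seq \<Sigma> ss \<Sigma>2" by (cases rule: exec.cases) auto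
  then show ?case using exec_block.IH by blast
next
  case (exec_if_true \<Sigma> e s1 \<Sigma>' s2)
  from exec_if_true.prems have "exec \<Sigma> s1 \<Sigma>2 \<or> eval \<Sigma> e (VBool False)"
    by (cases rule: exec.cases) auto
  then show ?case using exec_if_true by (auto simp: eval_iff)
next
  case (exec_if_false \<Sigma> e s2 \<Sigma>' s1)
  from exec_if_false.prems have "exec \<Sigma> s2 \<Sigma>2 \<or> eval \<Sigma> e (VBool True)"
    by (cases rule: exec.cases) auto
  then show ?case using exec_if_false by (auto simp: eval_iff)
next
  case (exec_for \<Sigma> e i x s \<Sigma>')
  from exec_for.prems obtain i' where "eval \<Sigma> (App Size [e]) (VInt i')" "exec_loop x s 0 i' \<Sigma> \<Sigma>2"
    by (cases rule: exec.cases) auto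
  moreover have "i' = i" using calculation(1) exec_for(1) by (simp add: eval_iff)
  ultimately show ?case using exec_for.IH by blast
next
  case (exec_seq_nil \<Sigma>)
  then show ?case by (cases rule: exec_seq.cases) auto
next
  case (exec_seq_cons \<Sigma> s \<Sigma>1 ss \<Sigma>')
  from exec_seq_cons.prems obtain \<Sigma>1' where "exec \<Sigma> s \<Sigma>1'" "exec_seq \<Sigma>1' ss \<Sigma>2"
    by (cases rule: exec_seq.cases) auto
  moreover have "\<Sigma>1' = \<Sigma>1" using calculation(1) exec_seq_cons.IH(1) by metis
  ultimately show ?case using exec_seq_cons.IH(2) by blast
next
  case (exec_loop_done i j x s \<Sigma>)
  from exec_loop_done.prems show ?case by (cases rule: exec_loop.cases) (use exec_loop_done in auto)
next
  case (exec_loop_step j i \<Sigma> x s \<Sigma>1 \<Sigma>')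
  from exec_loop_step.prems obtain \<Sigma>1' where "exec (\<Sigma>(x \<mapsto> VInt j)) s \<Sigma>1'" "exec_loop x s (j + 1) i \<Sigma>1' \<Sigma>2"
    using exec_loop_step(1) by (cases rule: exec_loop.cases) auto
  moreover have "\<Sigma>1' = \<Sigma>1" using calculation(1) exec_loop_step.IH(1) by metis
  ultimately show ?case using exec_loop_step.IH(2) by blast
qed


fun avars :: "stmt \<Rightarrow> string set" where
  "avars (Decl t x) = {x}"
| "avars (Assign x e) = {x}"
| "avars (Block ss) = (\<Union>s\<in>set ss. avars s)"
| "avars (If e s1 s2) = avars s1 \<union> avars s2"
| "avars (For x e s) = insert x (avars s)"

lemma exec_frame:
  "exec \<Sigma> s \<Sigma>' \<Longrightarrow> x \<notin> avars s \<Longrightarrow> \<Sigma>' x = \<Sigma> x"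
  "exec_seq \<Sigma> ss \<Sigma>' \<Longrightarrow> x \<notin> (\<Union>s\<in>set ss. avars s) \<Longrightarrow> \<Sigma>' x = \<Sigma> x"
  "exec_loop y s j i \<Sigma> \<Sigma>' \<Longrightarrow> x \<notin> insert y (avars s) \<Longrightarrow> \<Sigma>' x = \<Sigma> x"
  by (induction rule: exec_exec_seq_exec_loop.inducts) auto

lemma exec_dom:
  "exec \<Sigma> s \<Sigma>' \<Longrightarrow> dom \<Sigma> \<subseteq> dom \<Sigma>'"
  "exec_seq \<Sigma> ss \<Sigma>' \<Longrightarrow> dom \<Sigma> \<subseteq> dom \<Sigma>'"
  "exec_loop y s j i \<Sigma> \<Sigma>' \<Longrightarrow> dom \<Sigma> \<subseteq> dom \<Sigma>'"
proof (induction rule: exec_exec_seq_exec_loop.inducts)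
  case (exec_loop_step j i \<Sigma> x s \<Sigma>1 \<Sigma>')
  have "dom \<Sigma> \<subseteq> dom (\<Sigma>(x \<mapsto> VInt j))" by auto
  then show ?case using exec_loop_step.IH by blast
qed auto

lemma exec_seq_append:
  "exec_seq \<Sigma> xs \<Sigma>1 \<Longrightarrow> exec_seq \<Sigma>1 ys \<Sigma>2 \<Longrightarrow> exec_seq \<Sigma> (xs @ ys) \<Sigma>2"
proof (induction xs arbitrary: \<Sigma>)
  case Nil
  then show ?case by (cases rule: exec_seq.cases) auto
next
  case (Cons a xs)
  from Cons.prems(1) obtain \<Sigma>a where "exec \<Sigma> a \<Sigma>a" "exec_seq \<Sigma>a xs \<Sigma>1"
    by (cases rule: exec_seq.cases) auto
  then show ?case using Cons by (auto intro: exec_seq_cons)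
qed

definition hoare :: "(store \<Rightarrow> bool) \<Rightarrow> stmt list \<Rightarrow> (store \<Rightarrow> bool) \<Rightarrow> bool" where
  "hoare P ss Q \<longleftrightarrow> (\<forall>\<Sigma>. P \<Sigma> \<longrightarrow> (\<exists>\<Sigma>'. exec_seq \<Sigma> ss \<Sigma>' \<and> Q \<Sigma>'))"

definition hs :: "(store \<Rightarrow> bool) \<Rightarrow> stmt \<Rightarrow> (store \<Rightarrow> bool) \<Rightarrow> bool" where
  "hs P s Q \<longleftrightarrow> (\<forall>\<Sigma>. P \<Sigma> \<longrightarrow> (\<exists>\<Sigma>'. exec \<Sigma> s \<Sigma>' \<and> Q \<Sigma>'))"

lemma hoare_append: "hoare P xs Q \<Longrightarrow> hoare Q ys R \<Longrightarrow> hoare P (xs @ ys) R"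
  unfolding hoare_def using exec_seq_append by blast

lemma hoare_cons: "hs P s Q \<Longrightarrow> hoare Q ys R \<Longrightarrow> hoare P (s # ys) R"
  unfolding hoare_def hs_def using exec_seq_cons by blast

lemma hoare_nil: "(\<And>\<Sigma>. P \<Sigma> \<Longrightarrow> Q \<Sigma>) \<Longrightarrow> hoare P [] Q"
  unfolding hoare_def by (auto intro: exec_seq_nil)

lemma hoare_conseq: "hoare P ss Q \<Longrightarrow> (\<And>\<Sigma>. P' \<Sigma> \<Longrightarrow> P \<Sigma>) \<Longrightarrow> (\<And>\<Sigma>. Q \<Sigma> \<Longrightarrow> Q' \<Sigma>) \<Longrightarrow> hoare P' ss Q'"
  unfolding hoare_def by blast

lemma hs_conseq: "hs P s Q \<Longrightarrow> (\<And>\<Sigma>. P' \<Sigma> \<Longrightarrow> P \<Sigma>) \<Longrightarrow> (\<And>\<Sigma>. Q \<Sigma> \<Longrightarrow> Q' \<Sigma>) \<Longrightarrow> hs P' s Q'"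
  unfolding hs_def by blast

lemma hs_block: "hoare P ss Q \<Longrightarrow> hs P (Block ss) Q"
  unfolding hoare_def hs_def by (auto intro: exec_block)

lemma hs_assign: "(\<And>\<Sigma>. P \<Sigma> \<Longrightarrow> x \<in> dom \<Sigma> \<and> (\<exists>v. evalf \<Sigma> e = Some v \<and> Q (\<Sigma>(x \<mapsto> v)))) \<Longrightarrow> hs P (Assign x e) Q"
  unfolding hs_def by (metis exec_assign eval_iff)

lemma hs_if: "(\<And>\<Sigma>. P \<Sigma> \<Longrightarrow> \<exists>b. evalf \<Sigma> e = Some (VBool b) \<and> (b \<longrightarrow> P1 \<Sigma>) \<and> (\<not> b \<longrightarrow> P2 \<Sigma>)) \<Longrightarrow>
   hs P1 s1 Q \<Longrightarrow> hs P2 s2 Q \<Longrightarrow> hs P (If e s1 s2) Q"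
  unfolding hs_def
proof (intro allI impI)
  fix \<Sigma> assume a: "\<And>\<Sigma>. P \<Sigma> \<Longrightarrow> \<exists>b. evalf \<Sigma> e = Some (VBool b) \<and> (b \<longrightarrow> P1 \<Sigma>) \<and> (\<not> b \<longrightarrow> P2 \<Sigma>)"
    "\<forall>\<Sigma>. P1 \<Sigma> \<longrightarrow> (\<exists>\<Sigma>'. exec \<Sigma> s1 \<Sigma>' \<and> Q \<Sigma>')" "\<forall>\<Sigma>. P2 \<Sigma> \<longrightarrow> (\<exists>\<Sigma>'. exec \<Sigma> s2 \<Sigma>' \<and> Q \<Sigma>')" "P \<Sigma>"
  then obtain b where b: "evalf \<Sigma> e = Some (VBool b)" "b \<longrightarrow> P1 \<Sigma>" "\<not> b \<longrightarrow> P2 \<Sigma>" by blast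
  show "\<exists>\<Sigma>'. exec \<Sigma> (If e s1 s2) \<Sigma>' \<and> Q \<Sigma>'"
  proof (cases b)
    case True
    then show ?thesis using a(2) b exec_if_true[OF evalf_eval] by (metis (full_types))
  next
    case False
    then show ?thesis using a(3) b exec_if_false[OF evalf_eval] by (metis (full_types))
  qed
qed

lemma hs_skip: "(\<And>\<Sigma>. P \<Sigma> \<Longrightarrow> Q \<Sigma>) \<Longrightarrow> hs P (Block []) Q"
  by (rule hs_block, rule hoare_nil)

lemma loop_ex:
  assumes step: "\<And>k \<Sigma> j. I k \<Sigma> \<Longrightarrow> \<exists>\<Sigma>'. exec (\<Sigma>(x \<mapsto> VInt j)) s \<Sigma>' \<and> I (Suc k) \<Sigma>'"
  shows "I k \<Sigma> \<Longrightarrow> \<exists>\<Sigma>'. exec_loop x s j i \<Sigma> \<Sigma>' \<and> I (k + nat (i - j)) \<Sigma>'"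
proof (induction "nat (i - j)" arbitrary: k \<Sigma> j)
  case 0
  then show ?case by (auto intro: exec_loop_done)
next
  case (Suc n)
  from step[OF Suc.prems] obtain \<Sigma>1 where s1: "exec (\<Sigma>(x \<mapsto> VInt j)) s \<Sigma>1" "I (Suc k) \<Sigma>1" by blast
  have "n = nat (i - (j + 1))" using Suc.hyps(2) by simp
  from Suc.hyps(1)[OF this s1(2)] obtain \<Sigma>' where
    "exec_loop x s (j + 1) i \<Sigma>1 \<Sigma>'" "I (Suc k + nat (i - (j + 1))) \<Sigma>'" by blast
  moreover have "j < i" using Suc.hyps(2) by simp
  moreover have "Suc k + nat (i - (j + 1)) = k + nat (i - j)" using Suc.hyps(2) by simp
  ultimately show ?case using s1(1) by (metis exec_loop_step)
qed

lemma hs_for: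
  assumes "\<And>\<Sigma>. P \<Sigma> \<Longrightarrow> \<exists>zv. \<Sigma> z = Some (VInt zv) \<and> I 0 \<Sigma> \<and> (\<forall>\<Sigma>'. I (nat (size_int zv)) \<Sigma>' \<longrightarrow> Q \<Sigma>')"
    and "\<And>k \<Sigma> j. I k \<Sigma> \<Longrightarrow> \<exists>\<Sigma>'. exec (\<Sigma>(x \<mapsto> VInt j)) s \<Sigma>' \<and> I (Suc k) \<Sigma>'"
  shows "hs P (For x (Var z) s) Q"
  unfolding hs_def
proof (intro allI impI)
  fix \<Sigma> assume "P \<Sigma>"
  then obtain zv where zv: "\<Sigma> z = Some (VInt zv)" "I 0 \<Sigma>" "\<And>\<Sigma>'. I (nat (size_int zv)) \<Sigma>' \<Longrightarrow> Q \<Sigma>'"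
    using assms(1) by blast
  from loop_ex[of I x s, OF assms(2) zv(2), of 0 "size_int zv"] obtain \<Sigma>' where
    "exec_loop x s 0 (size_int zv) \<Sigma> \<Sigma>'" "I (nat (size_int zv)) \<Sigma>'" by auto
  moreover have "eval \<Sigma> (App Size [Var z]) (VInt (size_int zv))" using zv(1) by (simp add: eval_iff)
  ultimately show "\<exists>\<Sigma>'. exec \<Sigma> (For x (Var z) s) \<Sigma>' \<and> Q \<Sigma>'" using zv(3) by (blast intro: exec_for)
qed

fun bl :: "nat \<Rightarrow> nat" where
  "bl n = (if n = 0 then 0 else Suc (bl (n div 2)))"

declare bl.simps[simp del]

lemma bl_bounds: "n > 0 \<Longrightarrow> 2 ^ (bl n - 1) \<le> n \<and> n < 2 ^ bl n"
proof (induction n rule: bl.induct)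
  case (1 n)
  show ?case
  proof (cases "n div 2 = 0")
    case True
    then have "n = 1" using 1 by auto
    then show ?thesis by (simp add: bl.simps)
  next
    case False
    then have "2 ^ (bl (n div 2) - 1) \<le> n div 2 \<and> n div 2 < 2 ^ bl (n div 2)" using 1 by auto
    moreover have "bl n = Suc (bl (n div 2))" using 1 by (simp add: bl.simps)
    moreover have "bl (n div 2) > 0" using False by (simp add: bl.simps)
    ultimately show ?thesis by (cases "bl (n div 2)") auto
  qed
qed

lemma size_int_nat: "size_int (int n) = int (bl n)"
proof (cases "n = 0")
  case True
  then show ?thesis by (simp add: size_int_def bl.simps)
next
  case False
  then obtain k where k: "bl n = Suc k" by (simp add: bl.simps)
  with bl_bounds[of n] False have b: "2 ^ k \<le> n" "n < 2 ^ Suc k" by auto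
  have "real k < log 2 (real (n + 1))" using b by (intro less_log2_of_power) auto
  moreover have "log 2 (real (n + 1)) \<le> real (Suc k)" using b by (intro log2_of_power_le) auto
  ultimately have "\<lceil>log 2 (real (n + 1))\<rceil> = int (Suc k)" by (intro ceiling_unique) auto
  then show ?thesis unfolding size_int_def k by (simp add: add.commute)
qed

lemma size_int_abs: "size_int v = int (bl (nat \<bar>v\<bar>))"
  using size_int_nat[of "nat \<bar>v\<bar>"] by (simp add: size_int_def)



definition dig :: "int \<Rightarrow> int \<Rightarrow> nat \<Rightarrow> int" where
  "dig B X k = X div B ^ k mod B"

lemma dig_0: "dig B X 0 = X mod B" by (simp add: dig_def)

lemma dig_Suc: "B > 0 \<Longrightarrow> dig B X (Suc k) = dig B (X div B) k"
  by (simp add: dig_def zdiv_zmult2_eq mult.commute)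

lemma dig_push0: "0 \<le> a \<Longrightarrow> a < B \<Longrightarrow> dig B (B * X + a) 0 = a"
  by (simp add: dig_def)

lemma dig_pushS: "0 \<le> a \<Longrightarrow> a < B \<Longrightarrow> dig B (B * X + a) (Suc k) = dig B X k"
  by (simp add: dig_Suc)

definition tape_rel :: "int \<Rightarrow> (int \<Rightarrow> nat) \<Rightarrow> int \<Rightarrow> int \<Rightarrow> int \<Rightarrow> bool" where
  "tape_rel B tp h L R \<longleftrightarrow> (\<forall>k. int (tp (h + int k)) = dig B R k \<and> int (tp (h - 1 - int k)) = dig B L k)"

lemma tape_write_right:
  assumes B: "B > 1" and t: "tape_rel B tp h L R" and a: "0 \<le> a" "a < B"
  shows "tape_rel B (tp(h := nat a)) (h + 1) (B * L + a) ((B * (R div B) + a) div B)"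
  unfolding tape_rel_def
proof
  fix k
  have 1: "(B * (R div B) + a) div B = R div B" using B a by simp
  have "int ((tp(h := nat a)) (h + 1 + int k)) = int (tp (h + int (Suc k)))" by (simp add: ac_simps)
  also have "\<dots> = dig B R (Suc k)" using t unfolding tape_rel_def by blast
  also have "\<dots> = dig B (R div B) k" using B by (simp add: dig_Suc)
  finally have r: "int ((tp(h := nat a)) (h + 1 + int k)) = dig B ((B * (R div B) + a) div B) k"
    using 1 by simp
  have l: "int ((tp(h := nat a)) (h + 1 - 1 - int k)) = dig B (B * L + a) k"
  proof (cases k)
    case 0
    then show ?thesis using a by (simp add: dig_push0)
  next
    case (Suc k')
    have "int ((tp(h := nat a)) (h + 1 - 1 - int k)) = int (tp (h - 1 - int k'))" using Suc by (simp add: algebra_simps)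
    also have "\<dots> = dig B L k'" using t unfolding tape_rel_def by blast
    finally show ?thesis using Suc a by (simp add: dig_pushS)
  qed
  show "int ((tp(h := nat a)) (h + 1 + int k)) = dig B ((B * (R div B) + a) div B) k \<and>
        int ((tp(h := nat a)) (h + 1 - 1 - int k)) = dig B (B * L + a) k" using r l by blast
qed

lemma tape_write_left:
  assumes B: "B > 1" and t: "tape_rel B tp h L R" and a: "0 \<le> a" "a < B"
  shows "tape_rel B (tp(h := nat a)) (h - 1) (L div B) (B * (B * (R div B) + a) + L mod B)"
  unfolding tape_rel_def
proof
  fix k
  have r: "int ((tp(h := nat a)) (h - 1 + int k)) = dig B (B * (B * (R div B) + a) + L mod B) k"
  proof (cases k)
    case 0
    have "int ((tp(h := nat a)) (h - 1 + int k)) = int (tp (h - 1 - int 0))" using 0 by simp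
    also have "\<dots> = dig B L 0" using t unfolding tape_rel_def by blast
    finally show ?thesis using 0 B by (simp add: dig_push0 dig_0)
  next
    case (Suc k')
    have e: "dig B (B * (B * (R div B) + a) + L mod B) k = dig B (B * (R div B) + a) k'"
      using Suc B by (simp add: dig_pushS)
    show ?thesis
    proof (cases k')
      case 0
      then show ?thesis using e Suc a by (simp add: dig_push0)
    next
      case (Suc k'')
      have "int ((tp(h := nat a)) (h - 1 + int k)) = int (tp (h + int (Suc k''))) "
        using Suc \<open>k = Suc k'\<close> by (simp add: ac_simps)
      also have "\<dots> = dig B R (Suc k'')" using t unfolding tape_rel_def by blast
      also have "\<dots> = dig B (R div B) k''" using B by (simp add: dig_Suc)
      finally show ?thesis using e Suc a by (simp add: dig_pushS)
    qed
  qed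
  have l: "int ((tp(h := nat a)) (h - 1 - 1 - int k)) = dig B (L div B) k"
  proof -
    have "int ((tp(h := nat a)) (h - 1 - 1 - int k)) = int (tp (h - 1 - int (Suc k)))" by (simp add: algebra_simps)
    also have "\<dots> = dig B L (Suc k)" using t unfolding tape_rel_def by blast
    finally show ?thesis using B by (simp add: dig_Suc)
  qed
  show "int ((tp(h := nat a)) (h - 1 + int k)) = dig B (B * (B * (R div B) + a) + L mod B) k \<and>
        int ((tp(h := nat a)) (h - 1 - 1 - int k)) = dig B (L div B) k" using r l by blast
qed

lemma tape_write_stay:
  assumes B: "B > 1" and t: "tape_rel B tp h L R" and a: "0 \<le> a" "a < B"
  shows "tape_rel B (tp(h := nat a)) h L (B * (R div B) + a)"
  unfolding tape_rel_def
proof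
  fix k
  have r: "int ((tp(h := nat a)) (h + int k)) = dig B (B * (R div B) + a) k"
  proof (cases k)
    case 0
    then show ?thesis using a by (simp add: dig_push0)
  next
    case (Suc k')
    have "int ((tp(h := nat a)) (h + int k)) = int (tp (h + int (Suc k')))" using Suc by simp
    also have "\<dots> = dig B R (Suc k')" using t unfolding tape_rel_def by blast
    also have "\<dots> = dig B (R div B) k'" using B by (simp add: dig_Suc)
    finally show ?thesis using Suc a by (simp add: dig_pushS)
  qed
  have l: "int ((tp(h := nat a)) (h - 1 - int k)) = dig B L k"
    using t unfolding tape_rel_def by simp
  show "int ((tp(h := nat a)) (h + int k)) = dig B (B * (R div B) + a) k \<and>
        int ((tp(h := nat a)) (h - 1 - int k)) = dig B L k" using r l by blast
qed


fun execf :: "store \<Rightarrow> stmt \<Rightarrow> store option" and execl :: "store \<Rightarrow> stmt list \<Rightarrow> store option" where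
  "execf \<Sigma> (Decl t x) = Some (if t = TBool then \<Sigma>(x \<mapsto> VBool False) else \<Sigma>(x \<mapsto> VInt 0))"
| "execf \<Sigma> (Assign x e) = (if x \<in> dom \<Sigma> then (case evalf \<Sigma> e of Some v \<Rightarrow> Some (\<Sigma>(x \<mapsto> v)) | None \<Rightarrow> None) else None)"
| "execf \<Sigma> (Block ss) = execl \<Sigma> ss"
| "execf \<Sigma> (If e s1 s2) = (case evalf \<Sigma> e of Some (VBool b) \<Rightarrow> (if b then execf \<Sigma> s1 else execf \<Sigma> s2) | _ \<Rightarrow> None)"
| "execf \<Sigma> (For x e s) = None"
| "execl \<Sigma> [] = Some \<Sigma>"
| "execl \<Sigma> (s # ss) = (case execf \<Sigma> s of Some \<Sigma>1 \<Rightarrow> execl \<Sigma>1 ss | None \<Rightarrow> None)"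

lemma execf_exec:
  "execf \<Sigma> s = Some \<Sigma>' \<Longrightarrow> exec \<Sigma> s \<Sigma>'"
  "execl \<Sigma> ss = Some \<Sigma>' \<Longrightarrow> exec_seq \<Sigma> ss \<Sigma>'"
proof (induction \<Sigma> s and \<Sigma> ss arbitrary: \<Sigma>' and \<Sigma>' rule: execf_execl.induct)
  case (1 \<Sigma> t x)
  then show ?case
  proof (cases t)
    case TBool
    then show ?thesis using 1 by (auto intro: exec_decl_bool)
  qed (use 1 in \<open>auto intro: exec_decl_int simp: is_int_ty_def\<close>)
next
  case (2 \<Sigma> x e)
  then show ?case by (auto intro: exec_assign simp: eval_iff split: if_splits option.splits)
next
  case (3 \<Sigma> ss)
  then show ?case by (auto intro: exec_block)
next
  case (4 \<Sigma> e s1 s2)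
  then obtain b where b: "evalf \<Sigma> e = Some (VBool b)"
    by (auto split: option.splits val.splits)
  show ?case
  proof (cases b)
    case True
    then have "eval \<Sigma> e (VBool True)" using b evalf_eval by auto
    then show ?thesis using 4 b True exec_if_true by auto
  next
    case False
    then have "eval \<Sigma> e (VBool False)" using b evalf_eval by auto
    then show ?thesis using 4 b False exec_if_false by auto
  qed
next
  case (5 \<Sigma> x e s)
  then show ?case by simp
next
  case (6 \<Sigma>)
  then show ?case by (auto intro: exec_seq_nil)
next
  case (7 \<Sigma> s ss)
  then show ?case by (auto intro: exec_seq_cons split: option.splits)
qed

lemma execl_append: "execl \<Sigma> (xs @ ys) = (case execl \<Sigma> xs of Some \<Sigma>1 \<Rightarrow> execl \<Sigma>1 ys | None \<Rightarrow> None)"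
  by (induction xs arbitrary: \<Sigma>) (auto split: option.splits)

fun mulc :: "nat \<Rightarrow> expr \<Rightarrow> expr" where
  "mulc 0 e = e"
| "mulc (Suc n) e = App Add [e, mulc n e]"

lemma evalf_mulc: "evalf \<Sigma> e = Some (VInt v) \<Longrightarrow> evalf \<Sigma> (mulc n e) = Some (VInt (int (Suc n) * v))"
  by (induction n) (auto simp: int_bin_def algebra_simps)

lemma tyf_mulc: "tyf \<Gamma> e = Some t \<Longrightarrow> is_int_ty t \<Longrightarrow> tyf \<Gamma> (mulc n e) = Some t"
  by (induction n) (auto simp: is_int_ty_def ty_sup_def)

definition mulB :: "nat \<Rightarrow> expr \<Rightarrow> expr" where
  "mulB B e = mulc (B - 1) e"

lemma evalf_mulB: "1 \<le> B \<Longrightarrow> evalf \<Sigma> e = Some (VInt v) \<Longrightarrow> evalf \<Sigma> (mulB B e) = Some (VInt (int B * v))"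
  unfolding mulB_def using evalf_mulc[of \<Sigma> e v "B - 1"] by simp

lemma evalf_mulc2: "evalf \<Sigma> (mulc (Suc n) e) = (case evalf \<Sigma> e of Some (VInt v) \<Rightarrow> Some (VInt (int (Suc (Suc n)) * v)) | _ \<Rightarrow> None)"
proof (induction n)
  case 0
  then show ?case by (auto simp: int_bin_def split: option.splits val.splits)
next
  case (Suc n)
  then show ?case by (auto simp: int_bin_def algebra_simps split: option.splits val.splits)
qed

lemma evalf_mulB2: "2 \<le> B \<Longrightarrow> evalf \<Sigma> (mulB B e) = (case evalf \<Sigma> e of Some (VInt v) \<Rightarrow> Some (VInt (int B * v)) | _ \<Rightarrow> None)"
proof -
  assume "2 \<le> B"
  then have e: "Suc (B - 2) = B - 1" "Suc (Suc (B - 2)) = B" "Suc (B - 1) = B" by auto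
  show ?thesis unfolding mulB_def using evalf_mulc2[of \<Sigma> "B - 2" e] by (simp only: e)
qed

lemma tyf_mulB: "tyf \<Gamma> e = Some t \<Longrightarrow> is_int_ty t \<Longrightarrow> tyf \<Gamma> (mulB B e) = Some t"
  unfolding mulB_def by (rule tyf_mulc)

abbreviation "eAdd a b \<equiv> App Add [a, b]"
abbreviation "eSub a b \<equiv> App Sub [a, b]"
abbreviation "eMod a b \<equiv> App Mod [a, b]"
abbreviation "eDiv a b \<equiv> App Div [a, b]"
abbreviation "eEq a b \<equiv> App Eq [a, b]"
abbreviation "eNeq a b \<equiv> App Neq [a, b]"
abbreviation "eLt a b \<equiv> App Lt [a, b]"
abbreviation "eAnd a b \<equiv> App And [a, b]"

definition act :: "tm \<Rightarrow> nat \<Rightarrow> nat \<Rightarrow> stmt" where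
  "act M q0 a0 = (case delta M q0 a0 of (q', a', dd) \<Rightarrow>
     Block ([Assign ''R'' (eAdd (eSub (Var ''R'') (NumLit a0)) (NumLit a')), Assign ''q'' (NumLit q')] @
       (if dd = 1 then [Assign ''L'' (eAdd (mulB (nsyms M) (Var ''L'')) (NumLit a')),
                        Assign ''R'' (eDiv (Var ''R'') (NumLit (nsyms M)))]
        else if dd = -1 then [Assign ''R'' (eAdd (mulB (nsyms M) (Var ''R'')) (eMod (Var ''L'') (NumLit (nsyms M)))),
                              Assign ''L'' (eDiv (Var ''L'') (NumLit (nsyms M)))]
        else [])))"

fun chain :: "tm \<Rightarrow> (nat \<times> nat) list \<Rightarrow> stmt" where
  "chain M [] = Block []"
| "chain M ((q0, a0) # ps) = If (eAnd (eEq (Var ''q'') (NumLit q0)) (eEq (eMod (Var ''R'') (NumLit (nsyms M))) (NumLit a0)))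
      (act M q0 a0) (chain M ps)"

definition step :: "tm \<Rightarrow> stmt" where
  "step M = If (eEq (Var ''q'') (NumLit 1)) (Block []) (chain M (List.product [0..<nstates M] [0..<nsyms M]))"

definition Rel :: "tm \<Rightarrow> config \<Rightarrow> store \<Rightarrow> bool" where
  "Rel M c \<Sigma> \<longleftrightarrow> (case c of (q, tp, h) \<Rightarrow> q < nstates M \<and> \<Sigma> ''q'' = Some (VInt (int q)) \<and>
     (\<exists>L R. \<Sigma> ''L'' = Some (VInt L) \<and> \<Sigma> ''R'' = Some (VInt R) \<and> 0 \<le> L \<and> 0 \<le> R \<and>
        tape_rel (int (nsyms M)) tp h L R))"

lemma cdiv_nn: "0 \<le> a \<Longrightarrow> 0 < b \<Longrightarrow> cdiv a b = a div b"
  by (auto simp: cdiv_def sgn_if)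

lemma cmod_nn: "0 \<le> a \<Longrightarrow> 0 < b \<Longrightarrow> cmod a b = a mod b"
  by (auto simp: cmod_def cdiv_nn minus_div_mult_eq_mod[symmetric] algebra_simps)

lemma chain_sel:
  assumes "(q, a) \<in> set ps" "\<Sigma> ''q'' = Some (VInt (int q))" "\<Sigma> ''R'' = Some (VInt R)" "0 \<le> R"
    "R mod int (nsyms M) = int a" "nsyms M > 0"
  shows "execf \<Sigma> (chain M ps) = execf \<Sigma> (act M q a)"
  using assms(1)
proof (induction ps)
  case Nil
  then show ?case by simp
next
  case (Cons p ps)
  obtain q0 a0 where p: "p = (q0, a0)" by fastforce
  have g: "evalf \<Sigma> (eAnd (eEq (Var ''q'') (NumLit q0)) (eEq (eMod (Var ''R'') (NumLit (nsyms M))) (NumLit a0)))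
      = Some (VBool (q = q0 \<and> a = a0))"
    using assms(2-6) by (simp add: int_bin_def bool_bin_def cmod_nn)
  show ?case
  proof (cases "q = q0 \<and> a = a0")
    case True
    then show ?thesis using g p by simp
  next
    case False
    then have "(q, a) \<in> set ps" using Cons.prems p by auto
    then show ?thesis using g p False Cons.IH by simp
  qed
qed


lemma valid_delta: "valid_tm M \<Longrightarrow> q < nstates M \<Longrightarrow> a < nsyms M \<Longrightarrow> delta M q a = (q', a', dd) \<Longrightarrow>
   q' < nstates M \<and> a' < nsyms M \<and> (dd = -1 \<or> dd = 0 \<or> dd = 1)"
  unfolding valid_tm_def by fastforce

lemma act_ok:
  assumes v: "valid_tm M" and q: "q < nstates M" "\<Sigma> ''q'' = Some (VInt (int q))"
    and LR: "\<Sigma> ''L'' = Some (VInt L)" "\<Sigma> ''R'' = Some (VInt R)" "0 \<le> L" "0 \<le> R"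
    and t: "tape_rel (int (nsyms M)) tp h L R" and q1: "q \<noteq> 1"
  shows "\<exists>\<Sigma>'. execf \<Sigma> (act M q (tp h)) = Some \<Sigma>' \<and> Rel M (tm_step M (q, tp, h)) \<Sigma>'"
proof -
  define B where "B = int (nsyms M)"
  have B5: "nsyms M \<ge> 5" using v by (simp add: valid_tm_def)
  then have B1: "B > 1" unfolding B_def by simp
  have th: "int (tp h) = R mod B" using t unfolding tape_rel_def B_def by (metis add_0_right dig_0 of_nat_0)
  then have thB: "tp h < nsyms M" unfolding B_def using B1 B_def
    by (metis of_nat_less_iff pos_mod_bound zero_less_one order.strict_trans)
  obtain q' a' dd where d: "delta M q (tp h) = (q', a', dd)" by (cases "delta M q (tp h)") auto
  have vd: "q' < nstates M" "a' < nsyms M" "dd = -1 \<or> dd = 0 \<or> dd = 1"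
    using valid_delta[OF v q(1) thB d] by auto
  have ts: "tm_step M (q, tp, h) = (q', tp(h := a'), h + dd)" using q1 d by simp
  have R1: "R - int (tp h) + int a' = B * (R div B) + int a'" using th by (simp add: algebra_simps)
  have R1nn: "0 \<le> B * (R div B) + int a'" using B1 LR(4) by (simp add: pos_imp_zdiv_nonneg_iff)
  have a0: "0 \<le> int a'" "int a' < B" using vd unfolding B_def by auto
  have na: "tp(h := nat (int a')) = tp(h := a')" by simp
  have dv: "(B * (R div B) + int a') div B = R div B" using a0 B1 by simp
  have Rdnn: "0 \<le> R div B" using B1 LR(4) by (simp add: pos_imp_zdiv_nonneg_iff)
  have B0: "B > 0" using B1 by simp
  have Lnn: "0 \<le> B * L + int a'" using B1 LR(3) by simp
  consider "dd = 1" | "dd = -1" | "dd = 0" using vd by auto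
  then show ?thesis
  proof cases
    case 1
    have e: "execf \<Sigma> (act M q (tp h)) = Some (\<Sigma>(''R'' \<mapsto> VInt (R - int (tp h) + int a'), ''q'' \<mapsto> VInt (int q'),
        ''L'' \<mapsto> VInt (B * L + int a'), ''R'' \<mapsto> VInt (cdiv (R - int (tp h) + int a') B)))"
      using d 1 LR q B5 unfolding act_def B_def by (simp add: int_bin_def evalf_mulB2 algebra_simps domIff)
    have "tape_rel B (tp(h := a')) (h + 1) (B * L + int a') ((B * (R div B) + int a') div B)"
      using tape_write_right[OF B1 t[folded B_def] a0] na by (simp only: dv)
    then show ?thesis using e ts 1 vd Lnn R1nn B0 B1 unfolding Rel_def B_def[symmetric]
      by (simp add: R1 cdiv_nn dv Rdnn)
  next
    case 2
    have e: "execf \<Sigma> (act M q (tp h)) = Some (\<Sigma>(''R'' \<mapsto> VInt (R - int (tp h) + int a'), ''q'' \<mapsto> VInt (int q'),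
        ''R'' \<mapsto> VInt (B * (R - int (tp h) + int a') + cmod L B), ''L'' \<mapsto> VInt (cdiv L B)))"
      using d 2 LR q B5 unfolding act_def B_def by (simp add: int_bin_def evalf_mulB2 algebra_simps domIff)
    have tr: "tape_rel B (tp(h := a')) (h - 1) (L div B) (B * (B * (R div B) + int a') + L mod B)"
      using tape_write_left[OF B1 t[folded B_def] a0] na by simp
    have "0 \<le> L div B" using B1 LR(3) by (simp add: pos_imp_zdiv_nonneg_iff)
    then show ?thesis using tr e ts 2 vd B0 B1 R1nn LR(3) unfolding Rel_def B_def[symmetric]
      by (simp add: R1 cdiv_nn cmod_nn)
  next
    case 3
    have e: "execf \<Sigma> (act M q (tp h)) = Some (\<Sigma>(''R'' \<mapsto> VInt (R - int (tp h) + int a'), ''q'' \<mapsto> VInt (int q')))"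
      using d 3 LR q B5 unfolding act_def B_def by (simp add: int_bin_def evalf_mulB2 algebra_simps domIff)
    have "tape_rel B (tp(h := a')) h L (B * (R div B) + int a')"
      using tape_write_stay[OF B1 t[folded B_def] a0] na by simp
    then show ?thesis using e ts 3 vd B0 B1 R1nn LR unfolding Rel_def B_def[symmetric]
      by (simp add: R1)
  qed
qed



lemma step_ok:
  assumes v: "valid_tm M" and r: "Rel M c \<Sigma>"
  shows "\<exists>\<Sigma>'. execf \<Sigma> (step M) = Some \<Sigma>' \<and> Rel M (tm_step M c) \<Sigma>'"
proof -
  obtain q tp h where c: "c = (q, tp, h)" by (cases c) auto
  from r obtain L R where LR: "q < nstates M" "\<Sigma> ''q'' = Some (VInt (int q))" "\<Sigma> ''L'' = Some (VInt L)"
     "\<Sigma> ''R'' = Some (VInt R)" "0 \<le> L" "0 \<le> R" "tape_rel (int (nsyms M)) tp h L R"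
    unfolding Rel_def c by auto
  have B5: "nsyms M \<ge> 5" using v by (simp add: valid_tm_def)
  show ?thesis
  proof (cases "q = 1")
    case True
    then have "execf \<Sigma> (step M) = Some \<Sigma>" using LR unfolding step_def by (simp add: int_bin_def)
    moreover have "tm_step M c = c" using True c by simp
    ultimately show ?thesis using r by auto
  next
    case False
    have th: "int (tp h) = R mod int (nsyms M)" using LR(7) unfolding tape_rel_def
      by (metis add_0_right dig_0 of_nat_0)
    then have thB: "tp h < nsyms M" using B5
      by (metis of_nat_less_iff pos_mod_bound of_nat_0_less_iff zero_less_numeral order.strict_trans2
          less_imp_le_nat dual_order.strict_trans1 numeral_less_iff)
    have mem: "(q, tp h) \<in> set (List.product [0..<nstates M] [0..<nsyms M])" using thB LR(1) by simp
    have "execf \<Sigma> (step M) = execf \<Sigma> (chain M (List.product [0..<nstates M] [0..<nsyms M]))"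
      using LR False unfolding step_def by (simp add: int_bin_def)
    also have "\<dots> = execf \<Sigma> (act M q (tp h))"
      using chain_sel[OF mem LR(2) LR(4) LR(6) th[symmetric]] B5 by simp
    finally show ?thesis using act_ok[OF v LR(1,2,3,4,5,6,7) False] c by simp
  qed
qed

lemma avars_act: "avars (act M q a) \<subseteq> {''R'', ''L'', ''q''}"
  unfolding act_def by (auto split: prod.splits)

lemma avars_chain: "avars (chain M ps) \<subseteq> {''R'', ''L'', ''q''}"
  by (induction ps rule: chain.induct) (use avars_act in auto)

lemma avars_step: "avars (step M) \<subseteq> {''R'', ''L'', ''q''}"
  unfolding step_def using avars_chain by auto

lemma hoare_frame:
  assumes "hoare P ss Q"
    and "\<And>\<Sigma> \<Sigma>'. G \<Sigma> \<Longrightarrow> (\<forall>x. x \<notin> (\<Union>s\<in>set ss. avars s) \<longrightarrow> \<Sigma>' x = \<Sigma> x) \<Longrightarrow> dom \<Sigma> \<subseteq> dom \<Sigma>' \<Longrightarrow> G \<Sigma>'"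
  shows "hoare (\<lambda>\<Sigma>. P \<Sigma> \<and> G \<Sigma>) ss (\<lambda>\<Sigma>. Q \<Sigma> \<and> G \<Sigma>)"
  using assms exec_frame(2) exec_dom(2) unfolding hoare_def by metis

lemma hs_frame:
  assumes "hs P s Q"
    and "\<And>\<Sigma> \<Sigma>'. G \<Sigma> \<Longrightarrow> (\<forall>x. x \<notin> avars s \<longrightarrow> \<Sigma>' x = \<Sigma> x) \<Longrightarrow> dom \<Sigma> \<subseteq> dom \<Sigma>' \<Longrightarrow> G \<Sigma>'"
  shows "hs (\<lambda>\<Sigma>. P \<Sigma> \<and> G \<Sigma>) s (\<lambda>\<Sigma>. Q \<Sigma> \<and> G \<Sigma>)"
  using assms exec_frame(1) exec_dom(1) unfolding hs_def by metis

lemma hs_execf: "(\<And>\<Sigma>. P \<Sigma> \<Longrightarrow> \<exists>\<Sigma>'. execf \<Sigma> s = Some \<Sigma>' \<and> Q \<Sigma>') \<Longrightarrow> hs P s Q"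
  unfolding hs_def using execf_exec(1) by blast

lemma hoare_execl: "(\<And>\<Sigma>. P \<Sigma> \<Longrightarrow> \<exists>\<Sigma>'. execl \<Sigma> ss = Some \<Sigma>' \<and> Q \<Sigma>') \<Longrightarrow> hoare P ss Q"
  unfolding hoare_def using execf_exec(2) by blast

lemma hoare_single: "hs P s Q \<Longrightarrow> hoare P [s] Q"
  by (rule hoare_cons, assumption, rule hoare_nil)

definition pn :: "nat \<Rightarrow> string" where
  "pn j = replicate (Suc j) (CHR ''x'')"

lemma pn_inj: "pn i = pn j \<longleftrightarrow> i = j"
  unfolding pn_def by (metis length_replicate nat.inject)

lemma pn_ne [simp]: "pn j \<noteq> ''R''" "pn j \<noteq> ''L''" "pn j \<noteq> ''q''" "pn j \<noteq> ''N''" "pn j \<noteq> ''W''"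
  "pn j \<noteq> ''A''" "pn j \<noteq> ''g''" "pn j \<noteq> ''y''" "pn j \<noteq> ''z''" "pn j \<noteq> ''i''" "pn j \<noteq> ''k''"
  "''R'' \<noteq> pn j" "''L'' \<noteq> pn j" "''q'' \<noteq> pn j" "''N'' \<noteq> pn j" "''W'' \<noteq> pn j"
  "''A'' \<noteq> pn j" "''g'' \<noteq> pn j" "''y'' \<noteq> pn j" "''z'' \<noteq> pn j" "''i'' \<noteq> pn j" "''k'' \<noteq> pn j"
  by (simp_all add: pn_def)

definition Dvars :: "string set" where
  "Dvars = {''R'', ''L'', ''q'', ''N'', ''W'', ''A'', ''g'', ''y'', ''z''}"

definition Base :: "int list \<Rightarrow> store \<Rightarrow> bool" where
  "Base vs \<Sigma> \<longleftrightarrow> (\<forall>j < length vs. \<Sigma> (pn j) = Some (VInt (vs ! j))) \<and> Dvars \<subseteq> dom \<Sigma>"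

lemma Base_upd': "Base vs \<Sigma> \<Longrightarrow> x \<notin> range pn \<Longrightarrow> Base vs (\<Sigma>(x \<mapsto> v))"
  unfolding Base_def by (auto simp: image_iff)

lemma Base_frame: "Base vs \<Sigma> \<Longrightarrow> (\<forall>x. x \<notin> X \<longrightarrow> \<Sigma>' x = \<Sigma> x) \<Longrightarrow> dom \<Sigma> \<subseteq> dom \<Sigma>' \<Longrightarrow> X \<inter> range pn = {} \<Longrightarrow> Base vs \<Sigma>'"
  unfolding Base_def
proof (intro conjI allI impI)
  fix j assume a: "\<forall>x. x \<notin> X \<longrightarrow> \<Sigma>' x = \<Sigma> x" "X \<inter> range pn = {}"
    "(\<forall>j<length vs. \<Sigma> (pn j) = Some (VInt (vs ! j))) \<and> Dvars \<subseteq> dom \<Sigma>" "j < length vs"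
  then have "pn j \<notin> X" by auto
  then show "\<Sigma>' (pn j) = Some (VInt (vs ! j))" using a by auto
next
  assume "dom \<Sigma> \<subseteq> dom \<Sigma>'" "(\<forall>j<length vs. \<Sigma> (pn j) = Some (VInt (vs ! j))) \<and> Dvars \<subseteq> dom \<Sigma>"
  then show "Dvars \<subseteq> dom \<Sigma>'" by blast
qed

lemma Base_dom: "Base vs \<Sigma> \<Longrightarrow> x \<in> Dvars \<Longrightarrow> x \<in> dom \<Sigma>"
  unfolding Base_def by auto

lemma notpn [simp]: "''R'' \<notin> range pn" "''L'' \<notin> range pn" "''q'' \<notin> range pn" "''N'' \<notin> range pn"
  "''W'' \<notin> range pn" "''A'' \<notin> range pn" "''g'' \<notin> range pn" "''y'' \<notin> range pn" "''z'' \<notin> range pn"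
  "''i'' \<notin> range pn" "''k'' \<notin> range pn"
  by auto



definition num :: "int \<Rightarrow> nat list \<Rightarrow> int" where
  "num B xs = foldr (\<lambda>a r. int a + B * r) xs 0"

lemma num_Cons [simp]: "num B (a # xs) = int a + B * num B xs" by (simp add: num_def)
lemma num_Nil [simp]: "num B [] = 0" by (simp add: num_def)

definition hstep :: "nat \<times> nat list \<Rightarrow> nat \<times> nat list" where
  "hstep p = (fst p div 2, (fst p mod 2 + 1) # snd p)"

declare bits.simps [simp del]

lemma bits_ge2: "n \<ge> 2 \<Longrightarrow> bits n = bits (n div 2) @ [n mod 2 + 1]"
  by (subst bits.simps) simp

lemma bits_lt2: "n < 2 \<Longrightarrow> bits n = [n + 1]"
  by (subst bits.simps) simp

lemma hsteps: "n \<ge> 1 \<Longrightarrow> (hstep ^^ bl n) (n, ys) = (0, bits n @ ys)"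
proof (induction n arbitrary: ys rule: less_induct)
  case (less n)
  have bln: "bl n = Suc (bl (n div 2))" using less.prems by (subst bl.simps) simp
  have "(hstep ^^ bl n) (n, ys) = (hstep ^^ bl (n div 2)) (n div 2, (n mod 2 + 1) # ys)"
    unfolding bln funpow_Suc_right by (simp add: hstep_def)
  show ?case
  proof (cases "n div 2 = 0")
    case True
    then have "n = 1" using less.prems by auto
    then show ?thesis using \<open>(hstep ^^ bl n) (n, ys) = _\<close> by (simp add: bl.simps bits_lt2)
  next
    case False
    then have "(hstep ^^ bl (n div 2)) (n div 2, (n mod 2 + 1) # ys) = (0, bits (n div 2) @ (n mod 2 + 1) # ys)"
      using less.IH[of "n div 2"] less.prems by auto
    moreover have "bits n = bits (n div 2) @ [n mod 2 + 1]" using False by (intro bits_ge2) auto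
    ultimately show ?thesis using \<open>(hstep ^^ bl n) (n, ys) = _\<close> by simp
  qed
qed

definition push :: "nat \<Rightarrow> nat \<Rightarrow> stmt" where
  "push B a = Assign ''R'' (eAdd (NumLit a) (mulB B (Var ''R'')))"

definition hbody :: "nat \<Rightarrow> stmt" where
  "hbody B = Block [Assign ''R'' (eAdd (eAdd (eMod (Var ''N'') (NumLit 2)) (NumLit 1)) (mulB B (Var ''R''))),
                    Assign ''N'' (eDiv (Var ''N'') (NumLit 2))]"

definition enc1 :: "nat \<Rightarrow> nat \<Rightarrow> stmt list" where
  "enc1 B j = [push B 4, Assign ''N'' (Var (pn j)),
     If (eLt (Var ''N'') (NumLit 0)) (Assign ''N'' (eSub (NumLit 0) (Var ''N''))) (Block []),
     Assign ''y'' (Var ''N'')]"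

definition enc2 :: "nat \<Rightarrow> nat \<Rightarrow> stmt list" where
  "enc2 B j = [If (eEq (Var (pn j)) (NumLit 0)) (push B 1) (Block []),
     If (eLt (Var (pn j)) (NumLit 0)) (push B 3) (Block [])]"

definition enc :: "nat \<Rightarrow> nat \<Rightarrow> stmt list" where
  "enc B j = enc1 B j @ [For ''i'' (Var ''y'') (hbody B)] @ enc2 B j"

lemma hbody_ok:
  assumes "2 \<le> B" "Base vs \<Sigma>" "\<Sigma> ''N'' = Some (VInt (int a))" "\<Sigma> ''R'' = Some (VInt (num (int B) ys))"
  shows "\<exists>\<Sigma>'. exec (\<Sigma>(''i'' \<mapsto> VInt j')) (hbody B) \<Sigma>' \<and> Base vs \<Sigma>' \<and>
     \<Sigma>' ''N'' = Some (VInt (int (fst (hstep (a, ys))))) \<and> \<Sigma>' ''R'' = Some (VInt (num (int B) (snd (hstep (a, ys)))))"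
proof -
  have b: "Base vs (\<Sigma>(''i'' \<mapsto> VInt j'))" using assms(2) by (rule Base_upd') simp
  have d: "''R'' \<in> dom \<Sigma>" "''N'' \<in> dom \<Sigma>" using assms by auto
  let ?S = "\<Sigma>(''i'' \<mapsto> VInt j', ''R'' \<mapsto> VInt (int a mod 2 + 1 + int B * num (int B) ys),
              ''N'' \<mapsto> VInt (int (a div 2)))"
  have "execf (\<Sigma>(''i'' \<mapsto> VInt j')) (hbody B) = Some ?S"
    using assms d unfolding hbody_def
    by (simp add: evalf_mulB2 int_bin_def cmod_nn cdiv_nn of_nat_div domIff)
  moreover have "Base vs ?S" using b by (simp add: Base_upd')
  ultimately show ?thesis by (auto simp: hstep_def of_nat_mod intro!: execf_exec(1))
qed

lemma enc_input_drop: "j < length vs \<Longrightarrow>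
  enc_input (drop j vs) = enc_int (vs ! j) @ 4 # enc_input (drop (Suc j) vs)"
  by (simp add: enc_input_def Cons_nth_drop_Suc[symmetric])

lemma num_append: "num B (xs @ ys) = num B (xs @ []) + B ^ length xs * num B ys"
  by (induction xs) (auto simp: algebra_simps)

lemma enc_ok:
  assumes B: "2 \<le> B" and j: "j < length vs"
  shows "hoare (\<lambda>\<Sigma>. Base vs \<Sigma> \<and> \<Sigma> ''R'' = Some (VInt (num (int B) (enc_input (drop (Suc j) vs)))))
    (enc B j) (\<lambda>\<Sigma>. Base vs \<Sigma> \<and> \<Sigma> ''R'' = Some (VInt (num (int B) (enc_input (drop j vs)))))"
proof -
  define v where "v = vs ! j"
  define n where "n = nat \<bar>v\<bar>"
  define rest where "rest = enc_input (drop (Suc j) vs)"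
  define I where "I = (\<lambda>k \<Sigma>. Base vs \<Sigma> \<and> \<Sigma> ''N'' = Some (VInt (int (fst ((hstep ^^ k) (n, 4 # rest))))) \<and>
     \<Sigma> ''R'' = Some (VInt (num (int B) (snd ((hstep ^^ k) (n, 4 # rest))))))"
  have s1: "hoare (\<lambda>\<Sigma>. Base vs \<Sigma> \<and> \<Sigma> ''R'' = Some (VInt (num (int B) rest))) (enc1 B j)
     (\<lambda>\<Sigma>. I 0 \<Sigma> \<and> \<Sigma> ''y'' = Some (VInt (int n)))"
  proof (rule hoare_execl)
    fix \<Sigma> assume a: "Base vs \<Sigma> \<and> \<Sigma> ''R'' = Some (VInt (num (int B) rest))"
    then have pj: "\<Sigma> (pn j) = Some (VInt v)" using j unfolding Base_def v_def by auto
    have d: "''R'' \<in> dom \<Sigma>" "''N'' \<in> dom \<Sigma>" "''y'' \<in> dom \<Sigma>" using a Base_dom by (auto simp: Dvars_def)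
    let ?S = "\<Sigma>(''R'' \<mapsto> VInt (4 + int B * num (int B) rest), ''N'' \<mapsto> VInt (int n), ''y'' \<mapsto> VInt (int n))"
    have "execl \<Sigma> (enc1 B j) = Some ?S"
    proof (cases "v < 0")
      case True
      then show ?thesis using a d pj B unfolding enc1_def push_def n_def
        by (simp add: evalf_mulB2 int_bin_def domIff)
    next
      case False
      then show ?thesis using a d pj B unfolding enc1_def push_def n_def
        by (simp add: evalf_mulB2 int_bin_def domIff)
    qed
    moreover have "I 0 ?S \<and> ?S ''y'' = Some (VInt (int n))" using a unfolding I_def by (simp add: Base_upd')
    ultimately show "\<exists>\<Sigma>'. execl \<Sigma> (enc1 B j) = Some \<Sigma>' \<and> I 0 \<Sigma>' \<and> \<Sigma>' ''y'' = Some (VInt (int n))" by blast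
  qed
  have fin: "snd ((hstep ^^ bl n) (n, 4 # rest)) = (if n = 0 then 4 # rest else bits n @ 4 # rest)"
    using hsteps[of n "4 # rest"] by (auto simp: bl.simps)
  have s2: "hs (\<lambda>\<Sigma>. I 0 \<Sigma> \<and> \<Sigma> ''y'' = Some (VInt (int n))) (For ''i'' (Var ''y'') (hbody B)) (I (bl n))"
  proof (rule hs_for[where I = I])
    fix \<Sigma> assume "I 0 \<Sigma> \<and> \<Sigma> ''y'' = Some (VInt (int n))"
    then show "\<exists>zv. \<Sigma> ''y'' = Some (VInt zv) \<and> I 0 \<Sigma> \<and> (\<forall>\<Sigma>'. I (nat (size_int zv)) \<Sigma>' \<longrightarrow> I (bl n) \<Sigma>')"
      by (auto simp: size_int_nat)
  next
    fix k \<Sigma> j' assume "I k \<Sigma>"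
    then show "\<exists>\<Sigma>'. exec (\<Sigma>(''i'' \<mapsto> VInt j')) (hbody B) \<Sigma>' \<and> I (Suc k) \<Sigma>'"
      using hbody_ok[OF B, of vs \<Sigma> "fst ((hstep ^^ k) (n, 4 # rest))" "snd ((hstep ^^ k) (n, 4 # rest))" j']
      unfolding I_def by simp
  qed
  have s3: "hoare (I (bl n)) (enc2 B j)
     (\<lambda>\<Sigma>. Base vs \<Sigma> \<and> \<Sigma> ''R'' = Some (VInt (num (int B) (enc_int v @ 4 # rest))))"
  proof (rule hoare_execl)
    fix \<Sigma> assume a: "I (bl n) \<Sigma>"
    then have pj: "\<Sigma> (pn j) = Some (VInt v)" using j unfolding Base_def v_def I_def by auto
    have bs: "Base vs \<Sigma>" using a unfolding I_def by simp
    have R: "\<Sigma> ''R'' = Some (VInt (num (int B) (if n = 0 then 4 # rest else bits n @ 4 # rest)))"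
      using a fin unfolding I_def by simp
    have d: "''R'' \<in> dom \<Sigma>" using bs Base_dom by (auto simp: Dvars_def)
    consider "v = 0" | "v < 0" | "v > 0" by linarith
    then show "\<exists>\<Sigma>'. execl \<Sigma> (enc2 B j) = Some \<Sigma>' \<and> Base vs \<Sigma>' \<and> \<Sigma>' ''R'' = Some (VInt (num (int B) (enc_int v @ 4 # rest)))"
    proof cases
      case 1
      then show ?thesis using R pj d B bs unfolding enc2_def push_def n_def
        by (simp add: evalf_mulB2 int_bin_def domIff Base_upd' enc_int_def bits_lt2)
    next
      case 2
      then show ?thesis using R pj d B bs unfolding enc2_def push_def n_def
        by (simp add: evalf_mulB2 int_bin_def domIff Base_upd' enc_int_def)
    next
      case 3
      then show ?thesis using R pj d B bs unfolding enc2_def push_def n_def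
        by (simp add: evalf_mulB2 int_bin_def domIff Base_upd' enc_int_def)
    qed
  qed
  have "hoare (\<lambda>\<Sigma>. Base vs \<Sigma> \<and> \<Sigma> ''R'' = Some (VInt (num (int B) rest))) (enc B j)
     (\<lambda>\<Sigma>. Base vs \<Sigma> \<and> \<Sigma> ''R'' = Some (VInt (num (int B) (enc_int v @ 4 # rest))))"
    unfolding enc_def append_Cons append_Nil by (rule hoare_append[OF s1 hoare_cons[OF s2 s3]])
  then show ?thesis using enc_input_drop[OF j] unfolding rest_def v_def by simp
qed



definition encs :: "nat \<Rightarrow> nat \<Rightarrow> stmt list" where
  "encs B n = concat (map (enc B) (rev [0..<n]))"

lemma encs_ok:
  assumes B: "2 \<le> B"
  shows "n \<le> length vs \<Longrightarrow> hoare (\<lambda>\<Sigma>. Base vs \<Sigma> \<and> \<Sigma> ''R'' = Some (VInt (num (int B) (enc_input (drop n vs)))))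
    (encs B n) (\<lambda>\<Sigma>. Base vs \<Sigma> \<and> \<Sigma> ''R'' = Some (VInt (num (int B) (enc_input vs))))"
proof (induction n)
  case 0
  then show ?case unfolding encs_def by (auto intro: hoare_nil)
next
  case (Suc n)
  have "encs B (Suc n) = enc B n @ encs B n" unfolding encs_def by simp
  then show ?case using hoare_append[OF enc_ok[OF B, of n vs] Suc.IH] Suc.prems by simp
qed

lemma avars_enc: "\<Union>(avars ` set (enc B j)) \<subseteq> {''R'', ''N'', ''y'', ''i''}"
  unfolding enc_def enc1_def enc2_def push_def hbody_def by simp

lemma avars_encs: "\<Union>(avars ` set (encs B n)) \<subseteq> {''R'', ''N'', ''y'', ''i''}"
  unfolding encs_def using avars_enc by (simp add: UN_subset_iff)

abbreviation "DBL \<equiv> Assign ''W'' (eAdd (Var ''W'') (Var ''W''))"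

lemma dbl_rep: "\<Sigma> ''W'' = Some (VInt w) \<Longrightarrow> execl \<Sigma> (replicate r DBL) = Some (\<Sigma>(''W'' \<mapsto> VInt (w * 2 ^ r)))"
proof (induction r arbitrary: \<Sigma> w)
  case 0
  then show ?case by (simp add: map_upd_triv)
next
  case (Suc r)
  have "execf \<Sigma> DBL = Some (\<Sigma>(''W'' \<mapsto> VInt (w + w)))" using Suc.prems by (simp add: int_bin_def domIff)
  moreover have "execl (\<Sigma>(''W'' \<mapsto> VInt (w + w))) (replicate r DBL) = Some (\<Sigma>(''W'' \<mapsto> VInt ((w + w) * 2 ^ r)))"
    using Suc.IH[of "\<Sigma>(''W'' \<mapsto> VInt (w + w))" "w + w"] by (simp only: fun_upd_upd fun_upd_same)
  ultimately show ?case by (simp del: fun_upd_apply add: algebra_simps)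
qed

lemma dbl_loop:
  assumes xi: "xi \<noteq> ''W''" and "\<And>\<Sigma>. P \<Sigma> \<Longrightarrow> \<exists>w zv. \<Sigma> ''W'' = Some (VInt w) \<and> \<Sigma> z = Some (VInt zv) \<and>
      (\<forall>\<Sigma>'. (\<forall>x. x \<noteq> ''W'' \<and> x \<noteq> xi \<longrightarrow> \<Sigma>' x = \<Sigma> x) \<and> dom \<Sigma> \<subseteq> dom \<Sigma>' \<and>
              \<Sigma>' ''W'' = Some (VInt (w * 2 ^ bl (nat \<bar>zv\<bar>))) \<longrightarrow> Q \<Sigma>')"
  shows "hs P (For xi (Var z) DBL) Q"
  unfolding hs_def
proof (intro allI impI)
  fix \<Sigma> assume p: "P \<Sigma>"
  from assms(2)[OF p] obtain w zv where wz: "\<Sigma> ''W'' = Some (VInt w)" "\<Sigma> z = Some (VInt zv)" and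
    q: "\<forall>\<Sigma>'. (\<forall>x. x \<noteq> ''W'' \<and> x \<noteq> xi \<longrightarrow> \<Sigma>' x = \<Sigma> x) \<and> dom \<Sigma> \<subseteq> dom \<Sigma>' \<and>
              \<Sigma>' ''W'' = Some (VInt (w * 2 ^ bl (nat \<bar>zv\<bar>))) \<longrightarrow> Q \<Sigma>'"
    by (elim exE conjE) (rule that)
  define I where "I = (\<lambda>k \<Sigma>'. (\<forall>x. x \<noteq> ''W'' \<and> x \<noteq> xi \<longrightarrow> \<Sigma>' x = \<Sigma> x) \<and> dom \<Sigma> \<subseteq> dom \<Sigma>' \<and>
              \<Sigma>' ''W'' = Some (VInt (w * 2 ^ k)))"
  have "hs (\<lambda>\<Sigma>'. \<Sigma>' = \<Sigma>) (For xi (Var z) DBL) (I (bl (nat \<bar>zv\<bar>)))"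
  proof (rule hs_for[where I = I])
    fix \<Sigma>' assume "\<Sigma>' = \<Sigma>"
    then show "\<exists>zv'. \<Sigma>' z = Some (VInt zv') \<and> I 0 \<Sigma>' \<and> (\<forall>\<Sigma>''. I (nat (size_int zv')) \<Sigma>'' \<longrightarrow> I (bl (nat \<bar>zv\<bar>)) \<Sigma>'')"
      using wz unfolding I_def by (simp add: size_int_abs)
  next
    fix k \<Sigma>' j assume i: "I k \<Sigma>'"
    let ?S = "\<Sigma>'(xi \<mapsto> VInt j, ''W'' \<mapsto> VInt (w * 2 ^ k + w * 2 ^ k))"
    have w: "\<Sigma>' ''W'' = Some (VInt (w * 2 ^ k))" using i unfolding I_def by blast
    have "execf (\<Sigma>'(xi \<mapsto> VInt j)) DBL = Some ?S" using w xi
      by (simp add: int_bin_def domIff)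
    moreover have "I (Suc k) ?S" unfolding I_def
    proof (intro conjI allI impI)
      fix x assume "x \<noteq> ''W'' \<and> x \<noteq> xi"
      then show "?S x = \<Sigma> x" using i unfolding I_def by simp
    next
      show "dom \<Sigma> \<subseteq> dom ?S" using i unfolding I_def by auto
    next
      show "?S ''W'' = Some (VInt (w * 2 ^ Suc k))" by simp
    qed
    ultimately show "\<exists>\<Sigma>''. exec (\<Sigma>'(xi \<mapsto> VInt j)) DBL \<Sigma>'' \<and> I (Suc k) \<Sigma>''" using execf_exec(1) by blast
  qed
  then obtain \<Sigma>' where ex: "exec \<Sigma> (For xi (Var z) DBL) \<Sigma>'" and ii: "I (bl (nat \<bar>zv\<bar>)) \<Sigma>'" unfolding hs_def by blast
  have "Q \<Sigma>'" using mp[OF spec[OF q, of \<Sigma>'] ii[unfolded I_def]] .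
  then show "\<exists>\<Sigma>'. exec \<Sigma> (For xi (Var z) DBL) \<Sigma>' \<and> Q \<Sigma>'" using ex by blast
qed



lemma bl_pow2: "bl (2 ^ E) = Suc E"
proof (induction E)
  case 0
  then show ?case by (simp add: bl.simps)
next
  case (Suc E)
  then show ?case by (subst bl.simps) simp
qed

definition tm2 :: "nat \<Rightarrow> stmt list" where
  "tm2 j = [Assign ''y'' (Var (pn j)), For ''i'' (Var ''y'') DBL]"

definition sq :: "stmt list" where
  "sq = [Assign ''W'' (NumLit 1), For ''i'' (Var ''z'') (For ''k'' (Var ''z'') DBL), Assign ''z'' (Var ''W'')]"

definition timeb :: "nat \<Rightarrow> nat \<Rightarrow> nat \<Rightarrow> stmt list" where
  "timeb r n d = [Assign ''W'' (NumLit 1)] @ replicate r DBL @ concat (map tm2 [0..<n]) @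
      [Assign ''z'' (Var ''W'')] @ concat (replicate d sq)"

definition sumbl :: "int list \<Rightarrow> nat \<Rightarrow> nat" where
  "sumbl vs n = (\<Sum>j<n. bl (nat \<bar>vs ! j\<bar>))"

fun Eseq :: "nat \<Rightarrow> nat \<Rightarrow> nat" where
  "Eseq E0 0 = E0"
| "Eseq E0 (Suc k) = (Eseq E0 k + 1) * (Eseq E0 k + 1)"

lemma WinD: "''W'' \<in> Dvars" "''z'' \<in> Dvars" "''y'' \<in> Dvars" "''R'' \<in> Dvars" "''A'' \<in> Dvars" "''g'' \<in> Dvars"
  "''L'' \<in> Dvars" "''q'' \<in> Dvars" "''N'' \<in> Dvars"
  by (auto simp: Dvars_def)

lemma tm2_ok:
  assumes j: "j < length vs"
  shows "hoare (\<lambda>\<Sigma>. Base vs \<Sigma> \<and> \<Sigma> ''W'' = Some (VInt w)) (tm2 j)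
     (\<lambda>\<Sigma>. Base vs \<Sigma> \<and> \<Sigma> ''W'' = Some (VInt (w * 2 ^ bl (nat \<bar>vs ! j\<bar>))))"
  unfolding tm2_def
proof (rule hoare_cons[OF _ hoare_single])
  show "hs (\<lambda>\<Sigma>. Base vs \<Sigma> \<and> \<Sigma> ''W'' = Some (VInt w)) (Assign ''y'' (Var (pn j)))
    (\<lambda>\<Sigma>. Base vs \<Sigma> \<and> \<Sigma> ''W'' = Some (VInt w) \<and> \<Sigma> ''y'' = Some (VInt (vs ! j)))"
  proof (rule hs_execf)
    fix \<Sigma> assume a: "Base vs \<Sigma> \<and> \<Sigma> ''W'' = Some (VInt w)"
    then have "\<Sigma> (pn j) = Some (VInt (vs ! j))" "''y'' \<in> dom \<Sigma>" using j Base_dom WinD unfolding Base_def by auto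
    then show "\<exists>\<Sigma>'. execf \<Sigma> (Assign ''y'' (Var (pn j))) = Some \<Sigma>' \<and>
      Base vs \<Sigma>' \<and> \<Sigma>' ''W'' = Some (VInt w) \<and> \<Sigma>' ''y'' = Some (VInt (vs ! j))"
      using a by (simp add: Base_upd')
  qed
next
  show "hs (\<lambda>\<Sigma>. Base vs \<Sigma> \<and> \<Sigma> ''W'' = Some (VInt w) \<and> \<Sigma> ''y'' = Some (VInt (vs ! j)))
     (For ''i'' (Var ''y'') DBL)
     (\<lambda>\<Sigma>. Base vs \<Sigma> \<and> \<Sigma> ''W'' = Some (VInt (w * 2 ^ bl (nat \<bar>vs ! j\<bar>))))"
  proof (rule dbl_loop, simp)
    fix \<Sigma> assume a: "Base vs \<Sigma> \<and> \<Sigma> ''W'' = Some (VInt w) \<and> \<Sigma> ''y'' = Some (VInt (vs ! j))"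
    show "\<exists>w' zv. \<Sigma> ''W'' = Some (VInt w') \<and> \<Sigma> ''y'' = Some (VInt zv) \<and>
          (\<forall>\<Sigma>'. (\<forall>x. x \<noteq> ''W'' \<and> x \<noteq> ''i'' \<longrightarrow> \<Sigma>' x = \<Sigma> x) \<and> dom \<Sigma> \<subseteq> dom \<Sigma>' \<and>
                 \<Sigma>' ''W'' = Some (VInt (w' * 2 ^ bl (nat \<bar>zv\<bar>))) \<longrightarrow>
                 Base vs \<Sigma>' \<and> \<Sigma>' ''W'' = Some (VInt (w * 2 ^ bl (nat \<bar>vs ! j\<bar>))))"
    proof (intro exI conjI allI impI)
      fix \<Sigma>' assume b: "(\<forall>x. x \<noteq> ''W'' \<and> x \<noteq> ''i'' \<longrightarrow> \<Sigma>' x = \<Sigma> x) \<and> dom \<Sigma> \<subseteq> dom \<Sigma>' \<and>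
                 \<Sigma>' ''W'' = Some (VInt (w * 2 ^ bl (nat \<bar>vs ! j\<bar>)))"
      show "Base vs \<Sigma>'" using Base_frame[of vs \<Sigma> "{''W'', ''i''}" \<Sigma>'] a b by auto
      show "\<Sigma>' ''W'' = Some (VInt (w * 2 ^ bl (nat \<bar>vs ! j\<bar>)))" using b by blast
    qed (use a in auto)
  qed
qed

lemma tm2s_ok:
  "n \<le> length vs \<Longrightarrow> hoare (\<lambda>\<Sigma>. Base vs \<Sigma> \<and> \<Sigma> ''W'' = Some (VInt w)) (concat (map tm2 [0..<n]))
     (\<lambda>\<Sigma>. Base vs \<Sigma> \<and> \<Sigma> ''W'' = Some (VInt (w * 2 ^ sumbl vs n)))"
proof (induction n)
  case 0
  then show ?case by (auto intro: hoare_nil simp: sumbl_def)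
next
  case (Suc n)
  have "hoare (\<lambda>\<Sigma>. Base vs \<Sigma> \<and> \<Sigma> ''W'' = Some (VInt w)) (concat (map tm2 [0..<n]) @ tm2 n)
     (\<lambda>\<Sigma>. Base vs \<Sigma> \<and> \<Sigma> ''W'' = Some (VInt (w * 2 ^ sumbl vs n * 2 ^ bl (nat \<bar>vs ! n\<bar>))))"
    using hoare_append[OF Suc.IH tm2_ok] Suc.prems by simp
  moreover have "w * 2 ^ sumbl vs n * 2 ^ bl (nat \<bar>vs ! n\<bar>) = w * 2 ^ sumbl vs (Suc n)"
    by (simp add: sumbl_def power_add)
  ultimately show ?case by simp
qed

lemma sq_ok:
  "hoare (\<lambda>\<Sigma>. Base vs \<Sigma> \<and> \<Sigma> ''z'' = Some (VInt (2 ^ E))) sq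
     (\<lambda>\<Sigma>. Base vs \<Sigma> \<and> \<Sigma> ''z'' = Some (VInt (2 ^ ((E + 1) * (E + 1)))))"
proof -
  define I where "I = (\<lambda>k \<Sigma>. Base vs \<Sigma> \<and> \<Sigma> ''z'' = Some (VInt (2 ^ E)) \<and> \<Sigma> ''W'' = Some (VInt (2 ^ (k * (E + 1)))))"
  show ?thesis
  unfolding sq_def
proof (rule hoare_cons[OF _ hoare_cons[OF _ hoare_single]])
  show "hs (\<lambda>\<Sigma>. Base vs \<Sigma> \<and> \<Sigma> ''z'' = Some (VInt (2 ^ E))) (Assign ''W'' (NumLit 1))
     (\<lambda>\<Sigma>. Base vs \<Sigma> \<and> \<Sigma> ''z'' = Some (VInt (2 ^ E)) \<and> \<Sigma> ''W'' = Some (VInt 1))"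
    by (rule hs_execf) (use Base_dom WinD in \<open>auto simp: Base_upd'\<close>)
next
  show "hs (\<lambda>\<Sigma>. Base vs \<Sigma> \<and> \<Sigma> ''z'' = Some (VInt (2 ^ E)) \<and> \<Sigma> ''W'' = Some (VInt 1))
     (For ''i'' (Var ''z'') (For ''k'' (Var ''z'') DBL)) (I (E + 1))"
  proof (rule hs_for[where I = I])
    fix \<Sigma> assume "Base vs \<Sigma> \<and> \<Sigma> ''z'' = Some (VInt (2 ^ E)) \<and> \<Sigma> ''W'' = Some (VInt 1)"
    then show "\<exists>zv. \<Sigma> ''z'' = Some (VInt zv) \<and> I 0 \<Sigma> \<and> (\<forall>\<Sigma>'. I (nat (size_int zv)) \<Sigma>' \<longrightarrow> I (E + 1) \<Sigma>')"
      unfolding I_def by (auto simp: size_int_abs nat_power_eq bl_pow2)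
  next
    fix k \<Sigma> j assume i: "I k \<Sigma>"
    have "hs (\<lambda>\<Sigma>'. \<Sigma>' = \<Sigma>(''i'' \<mapsto> VInt j)) (For ''k'' (Var ''z'') DBL) (I (Suc k))"
    proof (rule dbl_loop, simp)
      fix \<Sigma>1 assume s1: "\<Sigma>1 = \<Sigma>(''i'' \<mapsto> VInt j)"
      show "\<exists>w zv. \<Sigma>1 ''W'' = Some (VInt w) \<and> \<Sigma>1 ''z'' = Some (VInt zv) \<and>
          (\<forall>\<Sigma>'. (\<forall>x. x \<noteq> ''W'' \<and> x \<noteq> ''k'' \<longrightarrow> \<Sigma>' x = \<Sigma>1 x) \<and> dom \<Sigma>1 \<subseteq> dom \<Sigma>' \<and>
                 \<Sigma>' ''W'' = Some (VInt (w * 2 ^ bl (nat \<bar>zv\<bar>))) \<longrightarrow> I (Suc k) \<Sigma>')"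
      proof (intro exI conjI allI impI)
        show "\<Sigma>1 ''W'' = Some (VInt (2 ^ (k * (E + 1))))" "\<Sigma>1 ''z'' = Some (VInt (2 ^ E))"
          using i s1 unfolding I_def by auto
        fix \<Sigma>' assume b: "(\<forall>x. x \<noteq> ''W'' \<and> x \<noteq> ''k'' \<longrightarrow> \<Sigma>' x = \<Sigma>1 x) \<and> dom \<Sigma>1 \<subseteq> dom \<Sigma>' \<and>
                 \<Sigma>' ''W'' = Some (VInt (2 ^ (k * (E + 1)) * 2 ^ bl (nat \<bar>2 ^ E\<bar>)))"
        have b1: "Base vs \<Sigma>1" using i s1 unfolding I_def by (simp add: Base_upd')
        have "Base vs \<Sigma>'" using Base_frame[of vs \<Sigma>1 "{''W'', ''k''}" \<Sigma>'] b1 b by auto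
        moreover have "\<Sigma>' ''z'' = Some (VInt (2 ^ E))" using b i s1 unfolding I_def by auto
        moreover have "\<Sigma>' ''W'' = Some (VInt (2 ^ (Suc k * (E + 1))))"
          using b by (simp add: nat_power_eq bl_pow2 power_add[symmetric] algebra_simps)
        ultimately show "I (Suc k) \<Sigma>'" unfolding I_def by blast
      qed
    qed
    then show "\<exists>\<Sigma>'. exec (\<Sigma>(''i'' \<mapsto> VInt j)) (For ''k'' (Var ''z'') DBL) \<Sigma>' \<and> I (Suc k) \<Sigma>'"
      unfolding hs_def by blast
  qed
next
  show "hs (I (E + 1))
     (Assign ''z'' (Var ''W''))
     (\<lambda>\<Sigma>. Base vs \<Sigma> \<and> \<Sigma> ''z'' = Some (VInt (2 ^ ((E + 1) * (E + 1)))))"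
    by (rule hs_execf) (use Base_dom WinD in \<open>auto simp: Base_upd' I_def algebra_simps\<close>)
qed
qed


lemma sqs_ok: "hoare (\<lambda>\<Sigma>. Base vs \<Sigma> \<and> \<Sigma> ''z'' = Some (VInt (2 ^ E0))) (concat (replicate d sq))
     (\<lambda>\<Sigma>. Base vs \<Sigma> \<and> \<Sigma> ''z'' = Some (VInt (2 ^ Eseq E0 d)))"
proof (induction d)
  case 0
  then show ?case by (auto intro: hoare_nil)
next
  case (Suc d)
  have "concat (replicate (Suc d) sq) = concat (replicate d sq) @ sq"
    by (induction d) auto
  then show ?case using hoare_append[OF Suc.IH sq_ok] by simp
qed

lemma timeb_ok:
  assumes "n \<le> length vs"
  shows "hoare (Base vs) (timeb r n d)
     (\<lambda>\<Sigma>. Base vs \<Sigma> \<and> \<Sigma> ''z'' = Some (VInt (2 ^ Eseq (r + sumbl vs n) d)))"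
proof -
  have s1: "hoare (Base vs) ([Assign ''W'' (NumLit 1)] @ replicate r DBL)
     (\<lambda>\<Sigma>. Base vs \<Sigma> \<and> \<Sigma> ''W'' = Some (VInt (2 ^ r)))"
  proof (rule hoare_execl)
    fix \<Sigma> assume b: "Base vs \<Sigma>"
    then have d: "''W'' \<in> dom \<Sigma>" using Base_dom WinD by auto
    have "execl \<Sigma> ([Assign ''W'' (NumLit 1)] @ replicate r DBL) = execl (\<Sigma>(''W'' \<mapsto> VInt 1)) (replicate r DBL)"
      using d by simp
    also have "\<dots> = Some (\<Sigma>(''W'' \<mapsto> VInt 1, ''W'' \<mapsto> VInt (1 * 2 ^ r)))" by (rule dbl_rep) simp
    finally show "\<exists>\<Sigma>'. execl \<Sigma> ([Assign ''W'' (NumLit 1)] @ replicate r DBL) = Some \<Sigma>' \<and>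
       Base vs \<Sigma>' \<and> \<Sigma>' ''W'' = Some (VInt (2 ^ r))" using b by (simp add: Base_upd')
  qed
  have s2: "hoare (\<lambda>\<Sigma>. Base vs \<Sigma> \<and> \<Sigma> ''W'' = Some (VInt (2 ^ r))) (concat (map tm2 [0..<n]))
     (\<lambda>\<Sigma>. Base vs \<Sigma> \<and> \<Sigma> ''W'' = Some (VInt (2 ^ (r + sumbl vs n))))"
    using tm2s_ok[OF assms, of "2 ^ r"] by (simp add: power_add)
  have s3: "hoare (\<lambda>\<Sigma>. Base vs \<Sigma> \<and> \<Sigma> ''W'' = Some (VInt (2 ^ (r + sumbl vs n)))) [Assign ''z'' (Var ''W'')]
     (\<lambda>\<Sigma>. Base vs \<Sigma> \<and> \<Sigma> ''z'' = Some (VInt (2 ^ (r + sumbl vs n))))"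
    by (rule hoare_execl) (use Base_dom WinD in \<open>auto simp: Base_upd'\<close>)
  show ?thesis unfolding timeb_def append_assoc[symmetric]
    by (rule hoare_append[OF hoare_append[OF hoare_append[OF s1 s2] s3] sqs_ok])
qed

lemma avars_timeb: "\<Union>(avars ` set (timeb r n d)) \<subseteq> {''W'', ''y'', ''z'', ''i'', ''k''}"
  unfolding timeb_def tm2_def sq_def by (auto simp: UN_subset_iff)

lemma Rel_upd: "x \<notin> {''q'', ''L'', ''R''} \<Longrightarrow> Rel M c (\<Sigma>(x \<mapsto> v)) = Rel M c \<Sigma>"
  unfolding Rel_def by (cases c) auto

lemma Rel_frame: "Rel M c \<Sigma> \<Longrightarrow> \<Sigma>' ''q'' = \<Sigma> ''q'' \<Longrightarrow> \<Sigma>' ''L'' = \<Sigma> ''L'' \<Longrightarrow> \<Sigma>' ''R'' = \<Sigma> ''R'' \<Longrightarrow> Rel M c \<Sigma>'"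
  unfolding Rel_def by (cases c) auto

lemma tm_run_Suc: "tm_run M (Suc k) c = tm_step M (tm_run M k c)"
  unfolding tm_run_def by simp

lemma main_ok:
  assumes v: "valid_tm M"
  shows "hs (\<lambda>\<Sigma>. Base vs \<Sigma> \<and> Rel M c0 \<Sigma> \<and> \<Sigma> ''z'' = Some (VInt zv)) (For ''i'' (Var ''z'') (step M))
     (\<lambda>\<Sigma>. Base vs \<Sigma> \<and> Rel M (tm_run M (bl (nat \<bar>zv\<bar>)) c0) \<Sigma>)"
proof (rule hs_for[where I = "\<lambda>k \<Sigma>. Base vs \<Sigma> \<and> Rel M (tm_run M k c0) \<Sigma>"])
  fix \<Sigma> assume "Base vs \<Sigma> \<and> Rel M c0 \<Sigma> \<and> \<Sigma> ''z'' = Some (VInt zv)"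
  then show "\<exists>zv'. \<Sigma> ''z'' = Some (VInt zv') \<and> (Base vs \<Sigma> \<and> Rel M (tm_run M 0 c0) \<Sigma>) \<and>
    (\<forall>\<Sigma>'. Base vs \<Sigma>' \<and> Rel M (tm_run M (nat (size_int zv')) c0) \<Sigma>' \<longrightarrow>
          Base vs \<Sigma>' \<and> Rel M (tm_run M (bl (nat \<bar>zv\<bar>)) c0) \<Sigma>')"
    by (auto simp: tm_run_def size_int_abs)
next
  fix k \<Sigma> j assume a: "Base vs \<Sigma> \<and> Rel M (tm_run M k c0) \<Sigma>"
  then have r: "Rel M (tm_run M k c0) (\<Sigma>(''i'' \<mapsto> VInt j))" by (simp add: Rel_upd)
  have b: "Base vs (\<Sigma>(''i'' \<mapsto> VInt j))" using a by (simp add: Base_upd')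
  from step_ok[OF v r] obtain \<Sigma>' where e: "execf (\<Sigma>(''i'' \<mapsto> VInt j)) (step M) = Some \<Sigma>'"
    and r': "Rel M (tm_step M (tm_run M k c0)) \<Sigma>'" by blast
  have ex: "exec (\<Sigma>(''i'' \<mapsto> VInt j)) (step M) \<Sigma>'" using e by (rule execf_exec)
  have "Base vs \<Sigma>'"
  proof (rule Base_frame[OF b])
    show "\<forall>x. x \<notin> {''R'', ''L'', ''q''} \<longrightarrow> \<Sigma>' x = (\<Sigma>(''i'' \<mapsto> VInt j)) x"
      using exec_frame(1)[OF ex] avars_step by blast
    show "dom (\<Sigma>(''i'' \<mapsto> VInt j)) \<subseteq> dom \<Sigma>'" using exec_dom(1)[OF ex] .
    show "{''R'', ''L'', ''q''} \<inter> range pn = {}" by auto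
  qed
  then show "\<exists>\<Sigma>'. exec (\<Sigma>(''i'' \<mapsto> VInt j)) (step M) \<Sigma>' \<and> Base vs \<Sigma>' \<and> Rel M (tm_run M (Suc k) c0) \<Sigma>'"
    using ex r' by (auto simp: tm_run_Suc)
qed



definition decode :: "nat list \<Rightarrow> int" where
  "decode xs = foldl (\<lambda>acc a. 2 * acc + (int a - 1)) 0 xs"

lemma decode_snoc: "decode (xs @ [a]) = 2 * decode xs + (int a - 1)"
  by (simp add: decode_def)

lemma decode_bits: "decode (bits n) = int n"
proof (induction n rule: less_induct)
  case (less n)
  show ?case
  proof (cases "n < 2")
    case True
    then show ?thesis by (simp add: bits_lt2 decode_def)
  next
    case False
    then have "decode (bits n) = 2 * int (n div 2) + int (n mod 2)"
      using less.IH[of "n div 2"] by (simp add: bits_ge2 decode_snoc)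
    moreover have "int n = 2 * int (n div 2) + int (n mod 2)"
      using div_mult_mod_eq[of n 2] by (metis of_nat_add of_nat_mult of_nat_numeral mult.commute)
    ultimately show ?thesis by simp
  qed
qed

lemma bits_set: "a \<in> set (bits n) \<Longrightarrow> a = 1 \<or> a = 2"
proof (induction n rule: less_induct)
  case (less n)
  show ?case
  proof (cases "n < 2")
    case True
    then show ?thesis using less.prems by (auto simp: bits_lt2)
  next
    case False
    then show ?thesis using less.prems less.IH[of "n div 2"] by (auto simp: bits_ge2)
  qed
qed

lemma bits_ne: "bits n \<noteq> []"
  by (cases "n < 2") (auto simp: bits_lt2 bits_ge2)

definition dec1 :: "nat \<Rightarrow> stmt list" where
  "dec1 B = [If (eEq (eMod (Var ''R'') (NumLit B)) (NumLit 3))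
       (Block [Assign ''g'' TrueLit, Assign ''R'' (eDiv (Var ''R'') (NumLit B))]) (Block []),
     Assign ''z'' (Var ''R''), Assign ''A'' (NumLit 0)]"

definition dbody :: "nat \<Rightarrow> stmt" where
  "dbody B = If (eNeq (eMod (Var ''R'') (NumLit B)) (NumLit 0))
     (Block [Assign ''A'' (eAdd (eAdd (Var ''A'') (Var ''A'')) (eSub (eMod (Var ''R'') (NumLit B)) (NumLit 1))),
             Assign ''R'' (eDiv (Var ''R'') (NumLit B))]) (Block [])"

definition dec3 :: "stmt list" where
  "dec3 = [If (Var ''g'') (Assign ''A'' (eSub (NumLit 0) (Var ''A''))) (Block [])]"

definition dec :: "nat \<Rightarrow> stmt list" where
  "dec B = dec1 B @ [For ''i'' (Var ''z'') (dbody B)] @ dec3"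

lemma dig_nonzero_bl:
  assumes B: "2 \<le> B" and X: "0 \<le> X" and d: "dig B X k \<noteq> 0"
  shows "k < bl (nat X)"
proof -
  have Bk: "(0::int) < B ^ k" using B by simp
  have "X div B ^ k \<noteq> 0" using d unfolding dig_def by auto
  then have "\<not> X < B ^ k" using X div_pos_pos_trivial by blast
  moreover have "(2::int) ^ k \<le> B ^ k" using B by (simp add: power_mono)
  ultimately have X2: "(2::int) ^ k \<le> X" by linarith
  then have n2: "2 ^ k \<le> nat X" using nat_mono[OF X2] by (simp add: nat_power_eq)
  have "(0::nat) < 2 ^ k" by simp
  then have "0 < nat X" using n2 by linarith
  then have "nat X < 2 ^ bl (nat X)" using bl_bounds by blast
  then have "(2::nat) ^ k < 2 ^ bl (nat X)" using n2 by linarith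
  then show ?thesis by simp
qed

lemma dloop_ok:
  assumes B: "2 \<le> B" and X: "0 \<le> X" and xs: "set xs \<subseteq> {1, 2}" "xs \<noteq> []"
    and dx: "\<forall>k < length xs. dig (int B) X k = int (xs ! k)" "dig (int B) X (length xs) = 0"
    and that: "\<And>\<Sigma> \<Sigma>'. G \<Sigma> \<Longrightarrow> \<Sigma>' ''g'' = \<Sigma> ''g'' \<Longrightarrow> G \<Sigma>'"
  shows "hs (\<lambda>\<Sigma>. Base vs \<Sigma> \<and> \<Sigma> ''R'' = Some (VInt X) \<and> \<Sigma> ''z'' = Some (VInt X) \<and> \<Sigma> ''A'' = Some (VInt 0) \<and> G \<Sigma>)
     (For ''i'' (Var ''z'') (dbody B)) (\<lambda>\<Sigma>. Base vs \<Sigma> \<and> \<Sigma> ''A'' = Some (VInt (decode xs)) \<and> G \<Sigma>)"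
proof -
  define lx where "lx = length xs"
  define I where "I = (\<lambda>k \<Sigma>. Base vs \<Sigma> \<and> \<Sigma> ''R'' = Some (VInt (X div int B ^ min k lx)) \<and>
      \<Sigma> ''A'' = Some (VInt (decode (take (min k lx) xs))) \<and> G \<Sigma>)"
  have Bp: "int B > 0" using B by simp
  have lx1: "lx - 1 < lx" using xs(2) unfolding lx_def by simp
  then have "xs ! (lx - 1) \<in> {1, 2}" using xs(1) unfolding lx_def by (meson nth_mem subsetD)
  then have "dig (int B) X (lx - 1) \<noteq> 0" using dx(1) lx1 unfolding lx_def by auto
  then have "lx - 1 < bl (nat X)" using dig_nonzero_bl[of "int B" X "lx - 1"] B X by simp
  then have lxbl: "lx \<le> bl (nat X)" by linarith
  show ?thesis
  proof (rule hs_for[where I = I])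
    fix \<Sigma> assume "Base vs \<Sigma> \<and> \<Sigma> ''R'' = Some (VInt X) \<and> \<Sigma> ''z'' = Some (VInt X) \<and> \<Sigma> ''A'' = Some (VInt 0) \<and> G \<Sigma>"
    then show "\<exists>zv. \<Sigma> ''z'' = Some (VInt zv) \<and> I 0 \<Sigma> \<and>
      (\<forall>\<Sigma>'. I (nat (size_int zv)) \<Sigma>' \<longrightarrow> Base vs \<Sigma>' \<and> \<Sigma>' ''A'' = Some (VInt (decode xs)) \<and> G \<Sigma>')"
      using lxbl X unfolding I_def by (auto simp: size_int_abs decode_def lx_def min_absorb2)
  next
    fix k \<Sigma> j assume i: "I k \<Sigma>"
    let ?m = "min k lx"
    have b: "Base vs (\<Sigma>(''i'' \<mapsto> VInt j))" using i unfolding I_def by (simp add: Base_upd')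
    have R: "\<Sigma> ''R'' = Some (VInt (X div int B ^ ?m))" and A: "\<Sigma> ''A'' = Some (VInt (decode (take ?m xs)))"
      and G: "G \<Sigma>" using i unfolding I_def by auto
    have dA: "''A'' \<in> dom \<Sigma>" "''R'' \<in> dom \<Sigma>" using i Base_dom WinD unfolding I_def by auto
    have nn: "0 \<le> X div int B ^ ?m" using X Bp by (simp add: pos_imp_zdiv_nonneg_iff)
    have md: "cmod (X div int B ^ ?m) (int B) = dig (int B) X ?m" using nn Bp by (simp add: cmod_nn dig_def)
    have dd: "cdiv (X div int B ^ ?m) (int B) = X div int B ^ Suc ?m"
    proof -
      have "X div int B ^ Suc ?m = X div (int B ^ ?m * int B)" by (simp only: power_Suc2)
      also have "\<dots> = X div int B ^ ?m div int B" using Bp by (simp add: zdiv_zmult2_eq)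
      finally show ?thesis using nn Bp by (simp add: cdiv_nn)
    qed
    show "\<exists>\<Sigma>'. exec (\<Sigma>(''i'' \<mapsto> VInt j)) (dbody B) \<Sigma>' \<and> I (Suc k) \<Sigma>'"
    proof (cases "k < lx")
      case True
      then have m: "?m = k" by simp
      have xk: "xs ! k = 1 \<or> xs ! k = 2" using xs True unfolding lx_def by (meson insert_iff nth_mem singletonD subsetD)
      have dk: "dig (int B) X k = int (xs ! k)" using dx True unfolding lx_def by auto
      let ?S = "\<Sigma>(''i'' \<mapsto> VInt j, ''A'' \<mapsto> VInt (decode (take k xs) + decode (take k xs) + (int (xs ! k) - 1)),
                  ''R'' \<mapsto> VInt (X div int B ^ Suc k))"
      have "execf (\<Sigma>(''i'' \<mapsto> VInt j)) (dbody B) = Some ?S"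
        using R A dA md dd xk dk unfolding dbody_def m by (auto simp: int_bin_def domIff)
      moreover have "I (Suc k) ?S"
      proof -
        have "take (Suc k) xs = take k xs @ [xs ! k]" using True unfolding lx_def by (simp add: take_Suc_conv_app_nth)
        then have "decode (take (Suc k) xs) = decode (take k xs) + decode (take k xs) + (int (xs ! k) - 1)"
          by (simp add: decode_snoc)
        moreover have "min (Suc k) lx = Suc k" using True by simp
        moreover have "Base vs ?S" using b by (simp add: Base_upd')
        moreover have "G ?S" using that[OF G] by simp
        ultimately show ?thesis unfolding I_def by simp
      qed
      ultimately show ?thesis using execf_exec(1) by blast
    next
      case False
      then have m: "?m = lx" by simp
      have R': "\<Sigma> ''R'' = Some (VInt (X div int B ^ lx))" using R m by simp
      have md': "cmod (X div int B ^ lx) (int B) = 0" using md dx(2) m unfolding lx_def by simp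
      have "execf (\<Sigma>(''i'' \<mapsto> VInt j)) (dbody B) = Some (\<Sigma>(''i'' \<mapsto> VInt j))"
        using R' md' unfolding dbody_def by (simp add: int_bin_def)
      moreover have "I (Suc k) (\<Sigma>(''i'' \<mapsto> VInt j))"
        using False b R A that[OF G, of "\<Sigma>(''i'' \<mapsto> VInt j)"] unfolding I_def by simp
      ultimately show ?thesis using execf_exec(1) by blast
    qed
  qed
qed


lemma dec_ok:
  assumes B: "2 \<le> B" and R0: "0 \<le> R0"
    and dR: "\<forall>k < length (enc_int fv). dig (int B) R0 k = int (enc_int fv ! k)"
       "dig (int B) R0 (length (enc_int fv)) = 0"
  shows "hoare (\<lambda>\<Sigma>. Base vs \<Sigma> \<and> \<Sigma> ''R'' = Some (VInt R0) \<and> \<Sigma> ''g'' = Some (VBool False)) (dec B)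
     (\<lambda>\<Sigma>. \<Sigma> ''A'' = Some (VInt fv))"
proof -
  define n where "n = nat \<bar>fv\<bar>"
  define xs where "xs = bits n"
  define X where "X = (if fv < 0 then R0 div int B else R0)"
  have Bp: "0 < int B" using B by simp
  have xs: "set xs \<subseteq> {1, 2}" "xs \<noteq> []" using bits_set bits_ne unfolding xs_def by auto
  have X0: "0 \<le> X" using R0 Bp unfolding X_def by (simp add: pos_imp_zdiv_nonneg_iff)
  have dX: "\<forall>k < length xs. dig (int B) X k = int (xs ! k)" "dig (int B) X (length xs) = 0"
  proof -
    show "\<forall>k < length xs. dig (int B) X k = int (xs ! k)"
    proof (cases "fv < 0")
      case True
      then have "enc_int fv = 3 # xs" unfolding enc_int_def xs_def n_def by simp
      then show ?thesis using dR(1) True Bp unfolding X_def by (auto simp: dig_Suc[symmetric])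
    next
      case False
      then have "enc_int fv = xs" unfolding enc_int_def xs_def n_def by simp
      then show ?thesis using dR(1) False unfolding X_def by auto
    qed
    show "dig (int B) X (length xs) = 0"
    proof (cases "fv < 0")
      case True
      then have "enc_int fv = 3 # xs" unfolding enc_int_def xs_def n_def by simp
      then show ?thesis using dR(2) True Bp unfolding X_def by (auto simp: dig_Suc[symmetric])
    next
      case False
      then have "enc_int fv = xs" unfolding enc_int_def xs_def n_def by simp
      then show ?thesis using dR(2) False unfolding X_def by auto
    qed
  qed
  have s1: "hoare (\<lambda>\<Sigma>. Base vs \<Sigma> \<and> \<Sigma> ''R'' = Some (VInt R0) \<and> \<Sigma> ''g'' = Some (VBool False)) (dec1 B)
     (\<lambda>\<Sigma>. Base vs \<Sigma> \<and> \<Sigma> ''R'' = Some (VInt X) \<and> \<Sigma> ''z'' = Some (VInt X) \<and> \<Sigma> ''A'' = Some (VInt 0) \<and>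
         \<Sigma> ''g'' = Some (VBool (fv < 0)))"
  proof (rule hoare_execl)
    fix \<Sigma> assume a: "Base vs \<Sigma> \<and> \<Sigma> ''R'' = Some (VInt R0) \<and> \<Sigma> ''g'' = Some (VBool False)"
    have d: "''R'' \<in> dom \<Sigma>" "''z'' \<in> dom \<Sigma>" "''A'' \<in> dom \<Sigma>" "''g'' \<in> dom \<Sigma>" using a Base_dom WinD by auto
    have m: "cmod R0 (int B) = dig (int B) R0 0" using R0 Bp by (simp add: cmod_nn dig_0)
    show "\<exists>\<Sigma>'. execl \<Sigma> (dec1 B) = Some \<Sigma>' \<and> Base vs \<Sigma>' \<and> \<Sigma>' ''R'' = Some (VInt X) \<and>
       \<Sigma>' ''z'' = Some (VInt X) \<and> \<Sigma>' ''A'' = Some (VInt 0) \<and> \<Sigma>' ''g'' = Some (VBool (fv < 0))"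
    proof (cases "fv < 0")
      case True
      then have "enc_int fv = 3 # xs" unfolding enc_int_def xs_def n_def by simp
      then have "dig (int B) R0 0 = 3" using dR(1) by auto
      then show ?thesis using a d m True R0 Bp unfolding dec1_def X_def
        by (simp add: int_bin_def domIff cdiv_nn Base_upd')
    next
      case False
      then have "enc_int fv = xs" unfolding enc_int_def xs_def n_def by simp
      then have "dig (int B) R0 0 = int (xs ! 0)" using dR(1) xs(2) by auto
      moreover have "xs ! 0 \<in> {1, 2}" using xs by (meson length_greater_0_conv nth_mem subsetD)
      ultimately have "dig (int B) R0 0 \<noteq> 3" by auto
      then show ?thesis using a d m False unfolding dec1_def X_def
        by (simp add: int_bin_def domIff Base_upd')
    qed
  qed
  have s2: "hs (\<lambda>\<Sigma>. Base vs \<Sigma> \<and> \<Sigma> ''R'' = Some (VInt X) \<and> \<Sigma> ''z'' = Some (VInt X) \<and> \<Sigma> ''A'' = Some (VInt 0) \<and>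
         \<Sigma> ''g'' = Some (VBool (fv < 0))) (For ''i'' (Var ''z'') (dbody B))
     (\<lambda>\<Sigma>. Base vs \<Sigma> \<and> \<Sigma> ''A'' = Some (VInt (decode xs)) \<and> \<Sigma> ''g'' = Some (VBool (fv < 0)))"
    by (rule dloop_ok[OF B X0 xs dX]) simp
  have s3: "hoare (\<lambda>\<Sigma>. Base vs \<Sigma> \<and> \<Sigma> ''A'' = Some (VInt (decode xs)) \<and> \<Sigma> ''g'' = Some (VBool (fv < 0))) dec3
     (\<lambda>\<Sigma>. \<Sigma> ''A'' = Some (VInt fv))"
  proof (rule hoare_execl)
    fix \<Sigma> assume a: "Base vs \<Sigma> \<and> \<Sigma> ''A'' = Some (VInt (decode xs)) \<and> \<Sigma> ''g'' = Some (VBool (fv < 0))"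
    have d: "''A'' \<in> dom \<Sigma>" using a Base_dom WinD by auto
    have dx: "decode xs = \<bar>fv\<bar>" unfolding xs_def n_def by (simp add: decode_bits)
    show "\<exists>\<Sigma>'. execl \<Sigma> dec3 = Some \<Sigma>' \<and> \<Sigma>' ''A'' = Some (VInt fv)"
      using a d dx unfolding dec3_def by (cases "fv < 0") (auto simp: int_bin_def domIff)
  qed
  show ?thesis unfolding dec_def append_Cons append_Nil
    by (rule hoare_append[OF s1 hoare_cons[OF s2 s3]])
qed



fun tyc :: "tenv \<Rightarrow> bool \<Rightarrow> stmt \<Rightarrow> bool" and tycl :: "tenv \<Rightarrow> bool \<Rightarrow> stmt list \<Rightarrow> bool" where
  "tyc \<Gamma> lp (Decl t x) = False"
| "tyc \<Gamma> lp (Assign x e) = (case \<Gamma> x of Some tx \<Rightarrow> \<not> (lp \<and> tx = TIInt) \<and>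
      (case tyf \<Gamma> e of Some t \<Rightarrow> compatible t tx | None \<Rightarrow> False) | None \<Rightarrow> False)"
| "tyc \<Gamma> lp (Block ss) = tycl \<Gamma> lp ss"
| "tyc \<Gamma> lp (If e s1 s2) = (tyf \<Gamma> e = Some TBool \<and> tyc \<Gamma> lp s1 \<and> tyc \<Gamma> lp s2)"
| "tyc \<Gamma> lp (For x e s) = (tyf \<Gamma> e = Some TIInt \<and> \<Gamma> x = None \<and> tyc (\<Gamma>(x \<mapsto> TIInt)) True s)"
| "tycl \<Gamma> lp [] = True"
| "tycl \<Gamma> lp (s # ss) = (tyc \<Gamma> lp s \<and> tycl \<Gamma> lp ss)"

lemma tyc_sound:
  "tyc \<Gamma> lp s \<Longrightarrow> stmt_ty \<Gamma> lp s \<Gamma>"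
  "tycl \<Gamma> lp ss \<Longrightarrow> seq_ty \<Gamma> lp ss \<Gamma>"
proof (induction \<Gamma> lp s and \<Gamma> lp ss rule: tyc_tycl.induct)
  case (2 \<Gamma> lp x e)
  then obtain tx t where "\<Gamma> x = Some tx" "\<not> (lp \<and> tx = TIInt)" "tyf \<Gamma> e = Some t" "compatible t tx"
    by (auto split: option.splits)
  then show ?case by (intro sty_assign) (auto intro: tyf_has_ty)
next
  case (3 \<Gamma> lp ss)
  then show ?case by (auto intro: sty_block)
next
  case (4 \<Gamma> lp e s1 s2)
  then show ?case by (auto intro: sty_if tyf_has_ty)
next
  case (5 \<Gamma> lp x e s)
  then have h: "has_ty \<Gamma> (App Size [e]) TIInt" by (intro tyf_has_ty) simp
  have st: "stmt_ty (\<Gamma>(x \<mapsto> TIInt)) True s (\<Gamma>(x \<mapsto> TIInt))" using 5 by (auto simp: fun_upd_def)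
  show ?case by (rule sty_for[OF h _ st]) (use 5 in \<open>simp add: domIff\<close>)
next
  case (7 \<Gamma> lp s ss)
  then show ?case by (auto intro: sty_cons)
qed (auto intro: sty_nil)

lemma tycl_append [simp]: "tycl \<Gamma> lp (xs @ ys) = (tycl \<Gamma> lp xs \<and> tycl \<Gamma> lp ys)"
  by (induction xs) auto

lemma tycl_concat: "(\<And>x. x \<in> set xs \<Longrightarrow> tycl \<Gamma> lp (f x)) \<Longrightarrow> tycl \<Gamma> lp (concat (map f xs))"
  by (induction xs) auto

lemma tycl_replicate: "tyc \<Gamma> lp s \<Longrightarrow> tycl \<Gamma> lp (replicate n s)"
  by (induction n) auto

lemma tycl_replicate_l: "tycl \<Gamma> lp ss \<Longrightarrow> tycl \<Gamma> lp (concat (replicate n ss))"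
  by (induction n) auto

lemma tyf_mulc2: "tyf \<Gamma> (mulc (Suc n) e) = (case tyf \<Gamma> e of Some t \<Rightarrow> if is_int_ty t then Some t else None | None \<Rightarrow> None)"
proof (induction n)
  case 0
  then show ?case by (auto simp: ty_sup_def is_int_ty_def split: option.splits)
next
  case (Suc n)
  then show ?case by (auto simp: ty_sup_def is_int_ty_def split: option.splits)
qed

lemma tyf_mulB2: "2 \<le> B \<Longrightarrow> tyf \<Gamma> (mulB B e) = (case tyf \<Gamma> e of Some t \<Rightarrow> if is_int_ty t then Some t else None | None \<Rightarrow> None)"
proof -
  assume "2 \<le> B"
  then have e: "B - 1 = Suc (B - 2)" by auto
  show ?thesis unfolding mulB_def e by (rule tyf_mulc2)
qed

definition GoodEnv :: "nat \<Rightarrow> tenv \<Rightarrow> bool" where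
  "GoodEnv m \<Gamma> \<longleftrightarrow> \<Gamma> ''R'' = Some TInt \<and> \<Gamma> ''L'' = Some TInt \<and> \<Gamma> ''q'' = Some TInt \<and> \<Gamma> ''N'' = Some TInt \<and>
     \<Gamma> ''W'' = Some TInt \<and> \<Gamma> ''A'' = Some TInt \<and> \<Gamma> ''g'' = Some TBool \<and> \<Gamma> ''y'' = Some TIInt \<and>
     \<Gamma> ''z'' = Some TIInt \<and> \<Gamma> ''i'' = None \<and> \<Gamma> ''k'' = None \<and> (\<forall>j<m. \<Gamma> (pn j) = Some TInt)"

lemma ty_act: "GoodEnv m \<Gamma> \<Longrightarrow> 2 \<le> nsyms M \<Longrightarrow> tyc (\<Gamma>(''i'' \<mapsto> TIInt)) True (act M q a)"
  unfolding act_def GoodEnv_def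
  by (auto simp: tyf_mulB2 is_int_ty_def compatible_def ty_sup_def split: prod.splits)

lemma ty_chain: "GoodEnv m \<Gamma> \<Longrightarrow> 2 \<le> nsyms M \<Longrightarrow> tyc (\<Gamma>(''i'' \<mapsto> TIInt)) True (chain M ps)"
proof (induction ps rule: chain.induct)
  case (2 M q0 a0 ps)
  then show ?case using ty_act[OF 2(2,3), unfolded fun_upd_def] unfolding GoodEnv_def by (simp add: is_int_ty_def ty_sup_def)
qed simp

lemma ty_main: "GoodEnv m \<Gamma> \<Longrightarrow> 2 \<le> nsyms M \<Longrightarrow> tyc \<Gamma> False (For ''i'' (Var ''z'') (step M))"
  using ty_chain[of m \<Gamma> M] unfolding step_def GoodEnv_def by (simp add: is_int_ty_def)

lemma ty_enc: "GoodEnv m \<Gamma> \<Longrightarrow> 2 \<le> B \<Longrightarrow> j < m \<Longrightarrow> tycl \<Gamma> False (enc B j)"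
  unfolding enc_def enc1_def enc2_def push_def hbody_def GoodEnv_def
  by (simp add: tyf_mulB2 is_int_ty_def compatible_def ty_sup_def)

lemma ty_encs: "GoodEnv m \<Gamma> \<Longrightarrow> 2 \<le> B \<Longrightarrow> tycl \<Gamma> False (encs B m)"
  unfolding encs_def by (rule tycl_concat) (auto intro: ty_enc)

lemma ty_timeb: "GoodEnv m \<Gamma> \<Longrightarrow> tycl \<Gamma> False (timeb r m d)"
  unfolding timeb_def
  apply (simp add: tycl_replicate tycl_replicate_l)
  apply (intro conjI tycl_replicate tycl_replicate_l tycl_concat)
  apply (auto simp: GoodEnv_def tm2_def sq_def is_int_ty_def compatible_def ty_sup_def)
  done

lemma ty_dec: "GoodEnv m \<Gamma> \<Longrightarrow> tycl \<Gamma> False (dec B)"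
  unfolding dec_def dec1_def dbody_def dec3_def GoodEnv_def
  by (simp add: is_int_ty_def compatible_def ty_sup_def)



lemma num_nn: "1 < B \<Longrightarrow> 0 \<le> num B w"
  by (induction w) auto

lemma dig_num: "1 < B \<Longrightarrow> (\<forall>a\<in>set w. int a < B) \<Longrightarrow> dig B (num B w) k = (if k < length w then int (w ! k) else 0)"
proof (induction w arbitrary: k)
  case Nil
  then show ?case by (simp add: dig_def)
next
  case (Cons a w)
  have e: "num B (a # w) = B * num B w + int a" by simp
  show ?case
  proof (cases k)
    case 0
    have "dig B (B * num B w + int a) 0 = int a" using Cons.prems by (intro dig_push0) auto
    then show ?thesis using 0 by (simp only: e) simp
  next
    case (Suc k')
    have "dig B (B * num B w + int a) (Suc k') = dig B (num B w) k'" using Cons.prems by (intro dig_pushS) auto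
    then have "dig B (num B (a # w)) k = dig B (num B w) k'" using Suc by (simp only: e)
    then show ?thesis using Cons Suc by simp
  qed
qed

lemma bits_len: "length (bits n) \<le> bl n + 1"
proof (induction n rule: less_induct)
  case (less n)
  show ?case
  proof (cases "n < 2")
    case True
    then show ?thesis by (simp add: bits_lt2)
  next
    case False
    then have "length (bits n) = length (bits (n div 2)) + 1" by (simp add: bits_ge2)
    moreover have "bl n = Suc (bl (n div 2))" using False by (subst bl.simps) simp
    moreover have "bl (n div 2) \<ge> 1" using False by (subst bl.simps) simp
    ultimately show ?thesis using less.IH[of "n div 2"] False by simp
  qed
qed

lemma enc_int_len: "length (enc_int v) \<le> bl (nat \<bar>v\<bar>) + 2"
  using bits_len[of "nat \<bar>v\<bar>"] unfolding enc_int_def by auto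

lemma enc_input_len: "length (enc_input vs) \<le> sumbl vs (length vs) + 3 * length vs"
proof -
  have "length (enc_input vs) = (\<Sum>v\<leftarrow>vs. length (enc_int v) + 1)"
    unfolding enc_input_def by (simp add: length_concat comp_def)
  also have "\<dots> = (\<Sum>j<length vs. length (enc_int (vs ! j)) + 1)"
    by (simp add: sum_list_sum_nth lessThan_atLeast0)
  also have "\<dots> \<le> (\<Sum>j<length vs. bl (nat \<bar>vs ! j\<bar>) + 3)"
    by (rule sum_mono) (use enc_int_len in \<open>fastforce\<close>)
  also have "\<dots> = sumbl vs (length vs) + 3 * length vs" by (simp add: sumbl_def sum.distrib)
  finally show ?thesis .
qed

lemma enc_input_syms: "a \<in> set (enc_input vs) \<Longrightarrow> a < 5"
  unfolding enc_input_def enc_int_def using bits_set by (fastforce split: if_splits)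

lemma Eseq_bound: "(E0 + 1) ^ Suc k \<le> Eseq E0 k + 1"
proof (induction k)
  case 0
  then show ?case by simp
next
  case (Suc k)
  have "E0 + 1 \<le> (E0 + 1) ^ Suc k" by (rule self_le_power) auto
  also have "\<dots> \<le> Eseq E0 k + 1" by (rule Suc.IH)
  finally have a: "E0 + 1 \<le> Eseq E0 k + 1" .
  have "(E0 + 1) ^ Suc (Suc k) = (E0 + 1) ^ Suc k * (E0 + 1)" by simp
  also have "\<dots> \<le> (Eseq E0 k + 1) * (Eseq E0 k + 1)" using Suc.IH a by (rule mult_le_mono)
  also have "\<dots> \<le> Eseq E0 (Suc k) + 1" by simp
  finally show ?case .
qed

lemma tm_run_halt: "fst (tm_run M t c) = 1 \<Longrightarrow> tm_run M (t + j) c = tm_run M t c"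
proof (induction j)
  case 0
  then show ?case by simp
next
  case (Suc j)
  have "tm_run M (t + Suc j) c = tm_step M (tm_run M (t + j) c)" by (simp add: tm_run_Suc[symmetric])
  also have "\<dots> = tm_step M (tm_run M t c)" using Suc by simp
  also have "\<dots> = tm_run M t c" using Suc.prems by (cases "tm_run M t c") auto
  finally show ?case .
qed

definition decls :: "stmt list" where
  "decls = [Decl TInt ''R'', Decl TInt ''L'', Decl TInt ''q'', Decl TInt ''N'', Decl TInt ''W'',
            Decl TInt ''A'', Decl TBool ''g'', Decl TIInt ''y'', Decl TIInt ''z'']"

definition theprog :: "tm \<Rightarrow> nat \<Rightarrow> nat \<Rightarrow> nat \<Rightarrow> prog" where
  "theprog M c d m = \<lparr>params = map pn [0..<m],
     body = decls @ encs (nsyms M) m @ timeb (c + 3 * m + 1) m d @ [For ''i'' (Var ''z'') (step M)] @ dec (nsyms M),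
     ret = Var ''A''\<rparr>"

lemma distinct_params: "distinct (map pn [0..<m])"
  by (simp add: distinct_map inj_on_def pn_inj)

lemma map_of_params: "map_of (zip (map pn [0..<m]) ys) x = (if x \<in> pn ` {..<m} then
   map_of (zip (map pn [0..<m]) ys) x else None)"
  by (auto simp: map_of_eq_None_iff dest!: set_zip_leftD)

lemma map_of_pn: "length ys = m \<Longrightarrow> j < m \<Longrightarrow> map_of (zip (map pn [0..<m]) ys) (pn j) = Some (ys ! j)"
  using map_of_zip_nth[of "map pn [0..<m]" ys j] distinct_params by simp

lemma map_of_notpn: "x \<notin> range pn \<Longrightarrow> map_of (zip (map pn [0..<m]) ys) x = None"
  by (auto simp: map_of_eq_None_iff dest!: set_zip_leftD)

lemma well_typed_prog: "2 \<le> nsyms M \<Longrightarrow> well_typed (theprog M c d m)"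
proof -
  assume B: "2 \<le> nsyms M"
  define \<Gamma>0 where "\<Gamma>0 = map_of (zip (map pn [0..<m]) (replicate m TInt))"
  define \<Gamma>1 where "\<Gamma>1 = \<Gamma>0(''R'' \<mapsto> TInt, ''L'' \<mapsto> TInt, ''q'' \<mapsto> TInt, ''N'' \<mapsto> TInt, ''W'' \<mapsto> TInt,
     ''A'' \<mapsto> TInt, ''g'' \<mapsto> TBool, ''y'' \<mapsto> TIInt, ''z'' \<mapsto> TIInt)"
  have n: "\<Gamma>0 x = None" if "x \<notin> range pn" for x using that unfolding \<Gamma>0_def by (rule map_of_notpn)
  have p: "\<Gamma>0 (pn j) = Some TInt" if "j < m" for j using map_of_pn[of "replicate m TInt" m j] that
    unfolding \<Gamma>0_def by simp
  have g: "GoodEnv m \<Gamma>1" unfolding GoodEnv_def \<Gamma>1_def using n p by simp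
  have s1: "seq_ty \<Gamma>0 False decls \<Gamma>1" unfolding decls_def \<Gamma>1_def
    apply (rule sty_cons, rule sty_decl, simp add: n domIff, simp)+
    apply (rule sty_nil)
    done
  have s2: "seq_ty \<Gamma>1 False (encs (nsyms M) m @ timeb (c + 3 * m + 1) m d @ [For ''i'' (Var ''z'') (step M)] @ dec (nsyms M)) \<Gamma>1"
    using ty_main[OF g B] ty_encs[OF g B] ty_timeb[OF g] ty_dec[OF g] by (intro tyc_sound(2)) simp
  have s: "seq_ty \<Gamma>0 False (body (theprog M c d m)) \<Gamma>1"
  proof -
    have "\<And>xs \<Gamma>a \<Gamma>b \<Gamma>c ys. seq_ty \<Gamma>a False xs \<Gamma>b \<Longrightarrow> seq_ty \<Gamma>b False ys \<Gamma>c \<Longrightarrow> seq_ty \<Gamma>a False (xs @ ys) \<Gamma>c"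
    proof -
      fix xs \<Gamma>a \<Gamma>b \<Gamma>c ys
      show "seq_ty \<Gamma>a False xs \<Gamma>b \<Longrightarrow> seq_ty \<Gamma>b False ys \<Gamma>c \<Longrightarrow> seq_ty \<Gamma>a False (xs @ ys) \<Gamma>c"
      proof (induction xs arbitrary: \<Gamma>a)
        case Nil
        then show ?case by (cases rule: seq_ty.cases) auto
      next
        case (Cons a xs)
        from Cons.prems(1) obtain \<Gamma>m where "stmt_ty \<Gamma>a False a \<Gamma>m" "seq_ty \<Gamma>m False xs \<Gamma>b"
          by (cases rule: seq_ty.cases) auto
        then show ?case using Cons by (auto intro: sty_cons)
      qed
    qed
    then show ?thesis using s1 s2 unfolding theprog_def by simp
  qed
  have "has_ty \<Gamma>1 (Var ''A'') TInt" unfolding \<Gamma>1_def by (rule ty_var) simp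
  then show ?thesis unfolding well_typed_def using distinct_params s
    by (auto simp: theprog_def \<Gamma>0_def is_int_ty_def)
qed



lemma init_Rel:
  assumes v: "valid_tm M" and s: "\<Sigma> ''q'' = Some (VInt 0)" "\<Sigma> ''L'' = Some (VInt 0)"
    "\<Sigma> ''R'' = Some (VInt (num (int (nsyms M)) (enc_input vs)))"
  shows "Rel M (init_config (enc_input vs)) \<Sigma>"
proof -
  define w where "w = enc_input vs"
  have B5: "nsyms M \<ge> 5" "nstates M \<ge> 2" using v by (auto simp: valid_tm_def)
  have B1: "1 < int (nsyms M)" using B5 by simp
  have sy: "\<forall>a\<in>set w. int a < int (nsyms M)" using enc_input_syms B5 unfolding w_def by fastforce
  have "tape_rel (int (nsyms M)) (\<lambda>i. if 0 \<le> i \<and> i < int (length w) then w ! nat i else 0) 0 0 (num (int (nsyms M)) w)"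
    unfolding tape_rel_def
  proof
    fix k
    show "int ((\<lambda>i. if 0 \<le> i \<and> i < int (length w) then w ! nat i else 0) (0 + int k)) = dig (int (nsyms M)) (num (int (nsyms M)) w) k \<and>
          int ((\<lambda>i. if 0 \<le> i \<and> i < int (length w) then w ! nat i else 0) (0 - 1 - int k)) = dig (int (nsyms M)) 0 k"
      using dig_num[OF B1 sy, of k] by (simp add: dig_def)
  qed
  then show ?thesis using s B5 num_nn[OF B1] unfolding Rel_def init_config_def w_def by simp
qed

lemma run_ok:
  assumes v: "valid_tm M" and len: "length vs = m"
    and t: "t \<le> c * (length (enc_input vs) + 1) ^ d"
    and out: "tm_output_is (tm_run M t (init_config (enc_input vs))) (enc_int fv)"
  shows "\<exists>\<Sigma>'. exec_seq (map_of (zip (map pn [0..<m]) (map VInt vs))) (body (theprog M c d m)) \<Sigma>' \<and>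
     \<Sigma>' ''A'' = Some (VInt fv)"
proof -
  define B where "B = nsyms M"
  define w where "w = enc_input vs"
  define c0 where "c0 = init_config w"
  define r where "r = c + 3 * m + 1"
  define E0 where "E0 = r + sumbl vs m"
  define E where "E = Eseq E0 d"
  define \<Sigma>0 where "\<Sigma>0 = map_of (zip (map pn [0..<m]) (map VInt vs))"
  have B5: "5 \<le> B" using v unfolding B_def valid_tm_def by simp
  then have B2: "2 \<le> B" by simp
  have "length w \<le> sumbl vs m + 3 * m" using enc_input_len[of vs] len unfolding w_def by simp
  then have lw: "length w + 1 \<le> E0 + 1" "c \<le> E0 + 1" unfolding E0_def r_def by auto
  have "t \<le> c * (length w + 1) ^ d" using t unfolding w_def .
  also have "\<dots> \<le> (E0 + 1) * (E0 + 1) ^ d" using lw by (intro mult_le_mono power_mono) auto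
  also have "\<dots> = (E0 + 1) ^ Suc d" by simp
  also have "\<dots> \<le> E + 1" unfolding E_def by (rule Eseq_bound)
  finally have tK: "t \<le> Suc E" by simp
  obtain q tp h where cfg: "tm_run M t c0 = (q, tp, h)" by (cases "tm_run M t c0") auto
  have q1: "q = 1" and o1: "\<forall>i<length (enc_int fv). tp (h + int i) = enc_int fv ! i"
    and o2: "tp (h + int (length (enc_int fv))) = 0"
    using out cfg unfolding tm_output_is_def c0_def w_def by auto
  have runK: "tm_run M (Suc E) c0 = (1, tp, h)"
    using tm_run_halt[of M t c0 "Suc E - t"] cfg q1 tK by simp
  have h1: "hoare (\<lambda>\<Sigma>. \<Sigma> = \<Sigma>0) decls (\<lambda>\<Sigma>. Base vs \<Sigma> \<and> (\<Sigma> ''R'' = Some (VInt 0) \<and> \<Sigma> ''L'' = Some (VInt 0) \<and>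
      \<Sigma> ''q'' = Some (VInt 0) \<and> \<Sigma> ''g'' = Some (VBool False)))"
  proof (rule hoare_execl)
    fix \<Sigma> assume s: "\<Sigma> = \<Sigma>0"
    have p: "\<forall>j<length vs. \<Sigma>0 (pn j) = Some (VInt (vs ! j))"
      using map_of_pn[of "map VInt vs" m] len unfolding \<Sigma>0_def by simp
    let ?S = "\<Sigma>0(''R'' \<mapsto> VInt 0, ''L'' \<mapsto> VInt 0, ''q'' \<mapsto> VInt 0, ''N'' \<mapsto> VInt 0, ''W'' \<mapsto> VInt 0,
        ''A'' \<mapsto> VInt 0, ''g'' \<mapsto> VBool False, ''y'' \<mapsto> VInt 0, ''z'' \<mapsto> VInt 0)"
    have e: "execl \<Sigma>0 decls = Some ?S" unfolding decls_def by simp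
    have "\<forall>j<length vs. ?S (pn j) = Some (VInt (vs ! j))" using p by simp
    moreover have "Dvars \<subseteq> dom ?S" unfolding Dvars_def by simp
    ultimately have "Base vs ?S" unfolding Base_def by blast
    then show "\<exists>\<Sigma>'. execl \<Sigma> decls = Some \<Sigma>' \<and> Base vs \<Sigma>' \<and> (\<Sigma>' ''R'' = Some (VInt 0) \<and>
        \<Sigma>' ''L'' = Some (VInt 0) \<and> \<Sigma>' ''q'' = Some (VInt 0) \<and> \<Sigma>' ''g'' = Some (VBool False))"
      using e s by simp
  qed
  have h2: "hoare (\<lambda>\<Sigma>. Base vs \<Sigma> \<and> (\<Sigma> ''R'' = Some (VInt 0) \<and> \<Sigma> ''L'' = Some (VInt 0) \<and>
      \<Sigma> ''q'' = Some (VInt 0) \<and> \<Sigma> ''g'' = Some (VBool False))) (encs B m)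
     (\<lambda>\<Sigma>. (Base vs \<Sigma> \<and> \<Sigma> ''R'' = Some (VInt (num (int B) w))) \<and> (\<Sigma> ''L'' = Some (VInt 0) \<and>
      \<Sigma> ''q'' = Some (VInt 0) \<and> \<Sigma> ''g'' = Some (VBool False)))"
  proof (rule hoare_conseq[OF hoare_frame[OF encs_ok[OF B2, of m vs]]])
    fix \<Sigma> \<Sigma>' :: store
    assume "\<Sigma> ''L'' = Some (VInt 0) \<and> \<Sigma> ''q'' = Some (VInt 0) \<and> \<Sigma> ''g'' = Some (VBool False)"
      "\<forall>x. x \<notin> \<Union>(avars ` set (encs B m)) \<longrightarrow> \<Sigma>' x = \<Sigma> x"
    moreover have "''L'' \<notin> \<Union>(avars ` set (encs B m))" "''q'' \<notin> \<Union>(avars ` set (encs B m))"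
      "''g'' \<notin> \<Union>(avars ` set (encs B m))" using avars_encs[of B m] by blast+
    ultimately show "\<Sigma>' ''L'' = Some (VInt 0) \<and> \<Sigma>' ''q'' = Some (VInt 0) \<and> \<Sigma>' ''g'' = Some (VBool False)"
      by (metis (no_types, lifting))
  qed (use len in \<open>auto simp: w_def enc_input_def\<close>)
  have h3: "hoare (\<lambda>\<Sigma>. (Base vs \<Sigma> \<and> \<Sigma> ''R'' = Some (VInt (num (int B) w))) \<and> (\<Sigma> ''L'' = Some (VInt 0) \<and>
      \<Sigma> ''q'' = Some (VInt 0) \<and> \<Sigma> ''g'' = Some (VBool False))) (timeb r m d)
     (\<lambda>\<Sigma>. (Base vs \<Sigma> \<and> \<Sigma> ''z'' = Some (VInt (2 ^ E))) \<and> (\<Sigma> ''R'' = Some (VInt (num (int B) w)) \<and> \<Sigma> ''L'' = Some (VInt 0) \<and>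
      \<Sigma> ''q'' = Some (VInt 0) \<and> \<Sigma> ''g'' = Some (VBool False)))"
  proof (rule hoare_conseq[OF hoare_frame[OF timeb_ok[of m vs r d]]])
    fix \<Sigma> \<Sigma>' :: store
    assume "\<Sigma> ''R'' = Some (VInt (num (int B) w)) \<and> \<Sigma> ''L'' = Some (VInt 0) \<and> \<Sigma> ''q'' = Some (VInt 0) \<and> \<Sigma> ''g'' = Some (VBool False)"
      "\<forall>x. x \<notin> \<Union>(avars ` set (timeb r m d)) \<longrightarrow> \<Sigma>' x = \<Sigma> x"
    moreover have "''L'' \<notin> \<Union>(avars ` set (timeb r m d))" "''q'' \<notin> \<Union>(avars ` set (timeb r m d))"
      "''g'' \<notin> \<Union>(avars ` set (timeb r m d))" "''R'' \<notin> \<Union>(avars ` set (timeb r m d))"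
      using avars_timeb[of r m d] by blast+
    ultimately show "\<Sigma>' ''R'' = Some (VInt (num (int B) w)) \<and> \<Sigma>' ''L'' = Some (VInt 0) \<and> \<Sigma>' ''q'' = Some (VInt 0) \<and> \<Sigma>' ''g'' = Some (VBool False)"
      by (metis (no_types, lifting))
  qed (use len in \<open>auto simp: E_def E0_def\<close>)
  have h4: "hs (\<lambda>\<Sigma>. (Base vs \<Sigma> \<and> \<Sigma> ''z'' = Some (VInt (2 ^ E))) \<and> (\<Sigma> ''R'' = Some (VInt (num (int B) w)) \<and> \<Sigma> ''L'' = Some (VInt 0) \<and>
      \<Sigma> ''q'' = Some (VInt 0) \<and> \<Sigma> ''g'' = Some (VBool False))) (For ''i'' (Var ''z'') (step M))
     (\<lambda>\<Sigma>. (Base vs \<Sigma> \<and> Rel M (1, tp, h) \<Sigma>) \<and> \<Sigma> ''g'' = Some (VBool False))"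
  proof (rule hs_conseq[OF hs_frame[OF main_ok[OF v, of vs c0 "2 ^ E"]]])
    fix \<Sigma> \<Sigma>' :: store
    assume a: "\<Sigma> ''g'' = Some (VBool False)" "\<forall>x. x \<notin> avars (For ''i'' (Var ''z'') (step M)) \<longrightarrow> \<Sigma>' x = \<Sigma> x"
    have ng: "''g'' \<notin> avars (For ''i'' (Var ''z'') (step M))" using avars_step[of M] by auto
    show "\<Sigma>' ''g'' = Some (VBool False)" using mp[OF spec[OF a(2), of "''g''"] ng] a(1) by simp
  next
    fix \<Sigma> assume a: "(Base vs \<Sigma> \<and> \<Sigma> ''z'' = Some (VInt (2 ^ E))) \<and> (\<Sigma> ''R'' = Some (VInt (num (int B) w)) \<and> \<Sigma> ''L'' = Some (VInt 0) \<and>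
      \<Sigma> ''q'' = Some (VInt 0) \<and> \<Sigma> ''g'' = Some (VBool False))"
    have "Rel M c0 \<Sigma>" using init_Rel[OF v, of \<Sigma> vs] a unfolding c0_def w_def B_def by simp
    then show "(Base vs \<Sigma> \<and> Rel M c0 \<Sigma> \<and> \<Sigma> ''z'' = Some (VInt (2 ^ E))) \<and> \<Sigma> ''g'' = Some (VBool False)"
      using a by simp
  next
    fix \<Sigma> assume "(Base vs \<Sigma> \<and> Rel M (tm_run M (bl (nat \<bar>2 ^ E\<bar>)) c0) \<Sigma>) \<and> \<Sigma> ''g'' = Some (VBool False)"
    then show "(Base vs \<Sigma> \<and> Rel M (1, tp, h) \<Sigma>) \<and> \<Sigma> ''g'' = Some (VBool False)"
      using runK by (simp add: nat_power_eq bl_pow2)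
  qed
  have h5: "hoare (\<lambda>\<Sigma>. (Base vs \<Sigma> \<and> Rel M (1, tp, h) \<Sigma>) \<and> \<Sigma> ''g'' = Some (VBool False)) (dec B)
     (\<lambda>\<Sigma>. \<Sigma> ''A'' = Some (VInt fv))"
    unfolding hoare_def
  proof (intro allI impI)
    fix \<Sigma> assume a: "(Base vs \<Sigma> \<and> Rel M (1, tp, h) \<Sigma>) \<and> \<Sigma> ''g'' = Some (VBool False)"
    then obtain L R0 where R0: "\<Sigma> ''R'' = Some (VInt R0)" "0 \<le> R0" "tape_rel (int B) tp h L R0"
      unfolding Rel_def B_def by auto
    have tr: "\<And>k. int (tp (h + int k)) = dig (int B) R0 k" using R0(3) unfolding tape_rel_def by blast
    have dR1: "\<forall>k < length (enc_int fv). dig (int B) R0 k = int (enc_int fv ! k)"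
      using o1 tr by (metis (no_types, lifting))
    have dR2: "dig (int B) R0 (length (enc_int fv)) = 0" using o2 tr by (metis of_nat_0)
    show "\<exists>\<Sigma>'. exec_seq \<Sigma> (dec B) \<Sigma>' \<and> \<Sigma>' ''A'' = Some (VInt fv)"
      using dec_ok[OF B2 R0(2) dR1 dR2, of vs] a R0(1) unfolding hoare_def by blast
  qed
  have "hoare (\<lambda>\<Sigma>. \<Sigma> = \<Sigma>0) (decls @ encs B m @ timeb r m d @ For ''i'' (Var ''z'') (step M) # dec B)
      (\<lambda>\<Sigma>. \<Sigma> ''A'' = Some (VInt fv))"
    by (rule hoare_append[OF h1 hoare_append[OF h2 hoare_append[OF h3 hoare_cons[OF h4 h5]]]])
  then show ?thesis unfolding hoare_def theprog_def \<Sigma>0_def B_def r_def by simp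
qed



theorem theorem4:
  fixes m :: nat and f :: "int list \<Rightarrow> int"
  assumes "in_FP m f"
  shows "in_FPC m f"
proof -
  obtain M c d where v: "valid_tm M" and H: "\<forall>vs. length vs = m \<longrightarrow>
        (\<exists>t. t \<le> c * (length (enc_input vs) + 1) ^ d \<and>
             tm_output_is (tm_run M t (init_config (enc_input vs))) (enc_int (f vs)))"
    using assms unfolding in_FP_def by blast
  define p where "p = theprog M c d m"
  have B2: "2 \<le> nsyms M" using v unfolding valid_tm_def by simp
  have wt: "well_typed p" unfolding p_def by (rule well_typed_prog[OF B2])
  have pc: "prog_computes p m f"
    unfolding prog_computes_def
  proof (intro conjI allI impI)
    show "length (params p) = m" unfolding p_def theprog_def by simp
  next
    fix vs :: "int list" and v assume len: "length vs = m"
    from H len obtain t where t: "t \<le> c * (length (enc_input vs) + 1) ^ d"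
      "tm_output_is (tm_run M t (init_config (enc_input vs))) (enc_int (f vs))" by blast
    from run_ok[OF v len t] obtain \<Sigma>' where
      ex: "exec_seq (map_of (zip (map pn [0..<m]) (map VInt vs))) (body (theprog M c d m)) \<Sigma>'"
      and A: "\<Sigma>' ''A'' = Some (VInt (f vs))" by blast
    have pp: "params p = map pn [0..<m]" "ret p = Var ''A''" "body p = body (theprog M c d m)"
      unfolding p_def theprog_def by simp_all
    show "prog_runs p vs v \<longleftrightarrow> v = VInt (f vs)"
    proof
      assume "prog_runs p vs v"
      then obtain \<Sigma>'' where e2: "exec_seq (map_of (zip (map pn [0..<m]) (map VInt vs))) (body (theprog M c d m)) \<Sigma>''"
        and ev: "eval \<Sigma>'' (Var ''A'') v" unfolding prog_runs_def pp by blast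
      have "\<Sigma>'' = \<Sigma>'" using exec_det(2)[OF e2 ex] .
      then show "v = VInt (f vs)" using ev A by (simp add: eval_iff)
    next
      assume "v = VInt (f vs)"
      then have "eval \<Sigma>' (Var ''A'') v" using A by (simp add: eval_iff)
      then show "prog_runs p vs v" unfolding prog_runs_def pp using ex len by auto
    qed
  qed
  show ?thesis unfolding in_FPC_def using wt pc by blast
qed


end
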